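(* Let $\ell\ge1$ be an integer and let $S_\ell$ be the restriction of $S^\ell$ to $(P_\ell)^{2\ell+1}$. Then the spectral radius satisfies $\rho(S_\ell)<1$. Equivalently, for every $c\in\mathbb{C}$ with $|c|=1$, the only $A\in(P_\ell)^{2\ell+1}$ satisfying $T^\ell(\omega)A(\omega)=c\,A(\omega^2)$ is $A=0$. Consequently $\mathbb{E}\,T^\ell(\omega^{2^k})T^\ell(\omega^{2^{k-1}})\cdots T^\ell(\omega)\to0$ as $k\to\infty$, where $\omega$ is uniform on the unit circle.
   Context: For $\ell\in\{\tfrac12,1,\tfrac32,\dots\}$ and $m,n\in\{-\ell,\dots,\ell\}$ let $\tau^\ell_{m,n}=\sqrt{\frac{(\ell-m)!(\ell+m)!}{(\ell-n)!(\ell+n)!}}\,\frac{i^{2\ell}}{2^\ell}\cdot[\text{coefficient of }z^{\ell-m}\text{ in }(z+1)^{\ell-n}(z-1)^{\ell+n}]$, and $\tau^\ell=(\tau^\ell_{m,n})$ (a unitary $(2\ell+1)\times(2\ell+1)$ matrix, indices $-\ell,\dots,\ell$). For integer $\ell\ge1$ let $T^\ell(\omega)=\tau^\ell\,\mathrm{diag}(\omega^{-\ell},\omega^{-\ell+1},\dots,\omega^{\ell})$. Let $P$ be the space of complex Laurent polynomials in $\omega$, and $P_\ell=\mathrm{span}_{\mathbb{C}}\{\omega^{-(\ell-1)},\dots,\omega^{\ell-1}\}$. Define $S^\ell:P^{2\ell+1}\to P^{2\ell+1}$ by: if $T^\ell(\omega)A=\big[\sum_j\beta_{h}(j)\omega^j\big]_{h=-\ell}^{\ell}$,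 then $S^\ell A=\big[\sum_j\beta_h(2j)\omega^j\big]_{h=-\ell}^{\ell}$. $S^\ell$ maps $(P_\ell)^{2\ell+1}$ into itself. *)

theory Defs
  imports "HOL-Analysis.Analysis" "HOL-Computational_Algebra.Polynomial"
    "Jordan_Normal_Form.Spectral_Radius"
begin

definition tau :: "nat \<Rightarrow> int \<Rightarrow> int \<Rightarrow> complex" where
  "tau l m n =
     complex_of_real (sqrt (fact (nat (int l - m)) * fact (nat (int l + m))
                          / (fact (nat (int l - n)) * fact (nat (int l + n)))))
     * (\<i> ^ (2 * l) / 2 ^ l)
     * of_int (coeff ([:1, 1:] ^ nat (int l - n) * [:-1, 1:] ^ nat (int l + n)) (nat (int l - m)))"

(* A vector of Laurent polynomials A \<in> P^(2l+1) is encoded by its coefficient array: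
   A h j = coefficient of \<omega>^j in the h-th component (h \<in> {-l..l}), finitely supported. *)

definition in_Pl :: "nat \<Rightarrow> (int \<Rightarrow> int \<Rightarrow> complex) \<Rightarrow> bool" where
  "in_Pl l A \<longleftrightarrow> (\<forall>h j. (h \<notin> {-int l..int l} \<or> j \<notin> {-(int l - 1)..int l - 1}) \<longrightarrow> A h j = 0)"

definition evalA :: "nat \<Rightarrow> (int \<Rightarrow> int \<Rightarrow> complex) \<Rightarrow> complex \<Rightarrow> int \<Rightarrow> complex" where
  "evalA l A \<omega> h = (\<Sum>j\<in>{-(int l - 1)..int l - 1}. A h j * \<omega> powi j)"

(* beta_h(j): coefficient of \<omega>^j in the h-th component of T^l(\<omega>) A,
   where T^l(\<omega>) = tau^l diag(\<omega>^-l, ..., \<omega>^l) *)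
definition beta :: "nat \<Rightarrow> (int \<Rightarrow> int \<Rightarrow> complex) \<Rightarrow> int \<Rightarrow> int \<Rightarrow> complex" where
  "beta l A h j = (if h \<in> {-int l..int l}
                    then (\<Sum>n\<in>{-int l..int l}. tau l h n * A n (j - n)) else 0)"

definition Sop :: "nat \<Rightarrow> (int \<Rightarrow> int \<Rightarrow> complex) \<Rightarrow> (int \<Rightarrow> int \<Rightarrow> complex)" where
  "Sop l A h j = beta l A h (2 * j)"

definition dimPl :: "nat \<Rightarrow> nat" where
  "dimPl l = (2 * l + 1) * (2 * l - 1)"

definition idx_h :: "nat \<Rightarrow> nat \<Rightarrow> int" where
  "idx_h l k = int (k div (2 * l - 1)) - int l"

definition idx_j :: "nat \<Rightarrow> nat \<Rightarrow> int" where
  "idx_j l k = int (k mod (2 * l - 1)) - (int l - 1)"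

definition basisPl :: "nat \<Rightarrow> nat \<Rightarrow> (int \<Rightarrow> int \<Rightarrow> complex)" where
  "basisPl l k = (\<lambda>h j. if h = idx_h l k \<and> j = idx_j l k then 1 else 0)"

definition S_mat :: "nat \<Rightarrow> complex Matrix.mat" where
  "S_mat l = Matrix.mat (dimPl l) (dimPl l)
     (\<lambda>(r, c). Sop l (basisPl l c) (idx_h l r) (idx_j l r))"

definition T_mat :: "nat \<Rightarrow> complex \<Rightarrow> complex Matrix.mat" where
  "T_mat l \<omega> = Matrix.mat (2 * l + 1) (2 * l + 1)
     (\<lambda>(r, c). tau l (int r - int l) (int c - int l) * \<omega> powi (int c - int l))"

primrec T_prod :: "nat \<Rightarrow> nat \<Rightarrow> complex \<Rightarrow> complex Matrix.mat" where
  "T_prod l 0 \<omega> = T_mat l \<omega>"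
| "T_prod l (Suc k) \<omega> = T_mat l (\<omega> ^ (2 ^ Suc k)) * T_prod l k \<omega>"

definition E_T_prod :: "nat \<Rightarrow> nat \<Rightarrow> nat \<Rightarrow> nat \<Rightarrow> complex" where
  "E_T_prod l k r c =
     integral {0..2 * pi} (\<lambda>t. T_prod l k (cis t) $$ (r, c)) / complex_of_real (2 * pi)"

end

theory Submission
  imports Defs
begin

lemma poly2_zero:
  fixes M :: "nat \<Rightarrow> nat \<Rightarrow> real"
  assumes "\<And>z w. (\<Sum>k\<le>N. \<Sum>k'\<le>N. M k k' * z^k * w^k') = 0"
  shows "k \<le> N \<Longrightarrow> k' \<le> N \<Longrightarrow> M k k' = 0"
proof -
  assume k: "k \<le> N" and k': "k' \<le> N"
  have "\<forall>w. (\<Sum>k'\<le>N. M k k' * w^k') = 0"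
  proof
    fix w
    have "\<forall>z. (\<Sum>k\<le>N. (\<Sum>k'\<le>N. M k k' * w^k') * z^k) = 0"
    proof
      fix z
      have "(\<Sum>k\<le>N. (\<Sum>k'\<le>N. M k k' * w^k') * z^k) = (\<Sum>k\<le>N. \<Sum>k'\<le>N. M k k' * z^k * w^k')"
        by (simp add: sum_distrib_right sum_distrib_left mult_ac)
      then show "(\<Sum>k\<le>N. (\<Sum>k'\<le>N. M k k' * w^k') * z^k) = 0" using assms by simp
    qed
    from polyfun_eq_0[THEN iffD1, OF this] k show "(\<Sum>k'\<le>N. M k k' * w^k') = 0" by simp
  qed
  from polyfun_eq_0[THEN iffD1, OF this] k' show "M k k' = 0" by simp
qed

definition PP :: "nat \<Rightarrow> int \<Rightarrow> int poly" where
  "PP l n = [:1, 1:] ^ nat (int l - n) * [:-1, 1:] ^ nat (int l + n)"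

definition CC :: "nat \<Rightarrow> int \<Rightarrow> nat \<Rightarrow> real" where
  "CC l n k = real_of_int (coeff (PP l n) k)"

definition FF :: "nat \<Rightarrow> int \<Rightarrow> real" where
  "FF l n = fact (nat (int l - n)) * fact (nat (int l + n))"

lemma FF_pos: "FF l n > 0" unfolding FF_def by simp

lemma sumI: "(\<Sum>n\<in>{-int l..int l}. g n) = (\<Sum>r<2*l+1. g (int r - int l))"
  by (rule sum.reindex_bij_witness[where j="\<lambda>n. nat (n + int l)" and i="\<lambda>r. int r - int l"]) auto

lemma poly_sum_le:
  fixes p :: "'a::comm_semiring_1 poly"
  assumes "degree p \<le> N"
  shows "poly p x = (\<Sum>i\<le>N. coeff p i * x ^ i)"
proof -
  have "poly p x = poly (\<Sum>i\<le>N. monom (coeff p i) i) x"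
    using poly_as_sum_of_monoms'[OF assms] by simp
  also have "\<dots> = (\<Sum>i\<le>N. coeff p i * x ^ i)" by (simp add: poly_sum poly_monom)
  finally show ?thesis .
qed

lemma map_PP: "map_poly (of_int :: int \<Rightarrow> real) (PP l n) = [:1, 1:] ^ nat (int l - n) * [:-1, 1:] ^ nat (int l + n)"
  unfolding PP_def by (simp add: of_int_poly_hom.hom_mult of_int_poly_hom.hom_power)

lemma deg_PP: assumes "n \<in> {-int l..int l}"
  shows "degree (map_poly (of_int :: int \<Rightarrow> real) (PP l n)) \<le> 2 * l"
proof -
  let ?a = "nat (int l - n)" and ?b = "nat (int l + n)"
  have "degree (([:1, 1:] :: real poly) ^ ?a * [:-1, 1:] ^ ?b) \<le> degree (([:1, 1:] :: real poly) ^ ?a) + degree (([:-1, 1:] :: real poly) ^ ?b)"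
    by (rule degree_mult_le)
  also have "\<dots> \<le> ?a * 1 + ?b * 1"
    by (intro add_mono order.trans[OF degree_power_le]) auto
  also have "\<dots> = 2 * l" using assms by auto
  finally show ?thesis by (simp add: map_PP)
qed

lemma poly_PP_sum: assumes "n \<in> {-int l..int l}"
  shows "(\<Sum>k\<le>2*l. CC l n k * z ^ k) = (1 + z) ^ nat (int l - n) * (z - 1) ^ nat (int l + n)"
proof -
  have "(\<Sum>k\<le>2*l. CC l n k * z ^ k) = poly (map_poly (of_int :: int \<Rightarrow> real) (PP l n)) z"
    by (subst poly_sum_le[OF deg_PP[OF assms]]) (simp add: CC_def)
  also have "\<dots> = (1 + z) ^ nat (int l - n) * (z - 1) ^ nat (int l + n)"
    by (simp add: map_PP poly_power algebra_simps)
  finally show ?thesis .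
qed

lemma gen_fun:
  fixes z w :: real
  shows "(\<Sum>n\<in>{-int l..int l}. ((1+z)^nat(int l - n)*(z-1)^nat(int l + n)) * ((1+w)^nat(int l - n)*(w-1)^nat(int l + n)) / FF l n)
       = (\<Sum>k\<le>2*l. 4^l / (fact k * fact (2*l-k)) * (z*w)^k)"
proof -
  let ?X = "(1+z)*(1+w)" and ?Y = "(z-1)*(w-1)"
  have "(\<Sum>n\<in>{-int l..int l}. ((1+z)^nat(int l - n)*(z-1)^nat(int l + n)) * ((1+w)^nat(int l - n)*(w-1)^nat(int l + n)) / FF l n)
      = (\<Sum>k\<le>2*l. ?X ^ k * ?Y ^ (2*l-k) / (fact k * fact (2*l-k)))"
  proof (rule sum.reindex_bij_witness[where j="\<lambda>n. nat (int l - n)" and i="\<lambda>k. int l - int k"])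
    fix n assume n: "n \<in> {-int l..int l}"
    have b: "2*l - nat (int l - n) = nat (int l + n)" using n by auto
    show "?X ^ nat (int l - n) * ?Y ^ (2*l - nat (int l - n)) / (fact (nat (int l - n)) * fact (2*l - nat (int l - n)))
       = ((1+z)^nat(int l - n)*(z-1)^nat(int l + n)) * ((1+w)^nat(int l - n)*(w-1)^nat(int l + n)) / FF l n"
      unfolding b FF_def by (simp add: power_mult_distrib mult_ac)
  qed auto
  also have "\<dots> = (\<Sum>k\<le>2*l. of_nat (2*l choose k) * ?X ^ k * ?Y ^ (2*l-k)) / fact (2*l)"
    by (simp add: sum_divide_distrib binomial_fact)
  also have "\<dots> = (?X + ?Y) ^ (2*l) / fact (2*l)" by (simp add: binomial_ring)
  also have "?X + ?Y = 2 * (1 + z*w)" by (simp add: algebra_simps)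
  also have "(2 * (1 + z*w)) ^ (2*l) = 4^l * (1 + z*w)^(2*l)"
    by (simp only: power_mult_distrib power_mult) simp
  also have "(1 + z*w)^(2*l) = (\<Sum>k\<le>2*l. of_nat (2*l choose k) * (z*w)^k)"
    using binomial_ring[of "z*w" 1 "2*l"] by (simp add: add.commute)
  also have "4^l * (\<Sum>k\<le>2*l. of_nat (2*l choose k) * (z*w)^k) / fact (2*l) = (\<Sum>k\<le>2*l. 4^l / (fact k * fact (2*l-k)) * (z*w)^k)"
    by (simp add: sum_distrib_left sum_divide_distrib binomial_fact)
  finally show ?thesis .
qed

lemma CC_orth:
  assumes k: "k \<le> 2*l" and k': "k' \<le> 2*l"
  shows "(\<Sum>n\<in>{-int l..int l}. CC l n k * CC l n k' / FF l n) = (if k = k' then 4^l / (fact k * fact (2*l-k)) else 0)"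
proof -
  define M where "M = (\<lambda>k k'. (\<Sum>n\<in>{-int l..int l}. CC l n k * CC l n k' / FF l n) - (if k = k' then 4^l / (fact k * fact (2*l-k)) else 0))"
  have "M k k' = 0"
  proof (rule poly2_zero[OF _ k k'])
    fix z w :: real
    have L: "(\<Sum>k\<le>2*l. \<Sum>k'\<le>2*l. (\<Sum>n\<in>{-int l..int l}. CC l n k * CC l n k' / FF l n) * z^k * w^k')
       = (\<Sum>n\<in>{-int l..int l}. (\<Sum>k\<le>2*l. CC l n k * z^k) * (\<Sum>k'\<le>2*l. CC l n k' * w^k') / FF l n)"
    proof -
      have "(\<Sum>n\<in>{-int l..int l}. (\<Sum>k\<le>2*l. CC l n k * z^k) * (\<Sum>k'\<le>2*l. CC l n k' * w^k') / FF l n)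
          = (\<Sum>n\<in>{-int l..int l}. \<Sum>k\<le>2*l. \<Sum>k'\<le>2*l. CC l n k * CC l n k' / FF l n * z^k * w^k')"
        by (unfold sum_product, simp add: sum_divide_distrib mult_ac)
      also have "\<dots> = (\<Sum>k\<le>2*l. \<Sum>n\<in>{-int l..int l}. \<Sum>k'\<le>2*l. CC l n k * CC l n k' / FF l n * z^k * w^k')"
        by (rule sum.swap)
      also have "\<dots> = (\<Sum>k\<le>2*l. \<Sum>k'\<le>2*l. \<Sum>n\<in>{-int l..int l}. CC l n k * CC l n k' / FF l n * z^k * w^k')"
        by (rule sum.cong[OF refl], rule sum.swap)
      also have "\<dots> = (\<Sum>k\<le>2*l. \<Sum>k'\<le>2*l. (\<Sum>n\<in>{-int l..int l}. CC l n k * CC l n k' / FF l n) * z^k * w^k')"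
        by (simp add: sum_distrib_right)
      finally show ?thesis by simp
    qed
    have R: "(\<Sum>k\<le>2*l. \<Sum>k'\<le>2*l. (if k = k' then 4^l / (fact k * fact (2*l-k)) else 0) * z^k * w^k')
       = (\<Sum>k\<le>2*l. 4^l / (fact k * fact (2*l-k)) * (z*w)^k)"
    proof (rule sum.cong[OF refl])
      fix k assume "k \<in> {..2*l}"
      then show "(\<Sum>k'\<le>2*l. (if k = k' then 4^l / (fact k * fact (2*l-k)) else 0) * z^k * w^k') = 4^l / (fact k * fact (2*l-k)) * (z*w)^k"
        by (simp add: if_distrib[where f="\<lambda>x. x * _"] sum.delta power_mult_distrib cong: if_cong)
    qed
    have "(\<Sum>n\<in>{-int l..int l}. (\<Sum>k\<le>2*l. CC l n k * z^k) * (\<Sum>k'\<le>2*l. CC l n k' * w^k') / FF l n)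
        = (\<Sum>k\<le>2*l. 4^l / (fact k * fact (2*l-k)) * (z*w)^k)"
      using gen_fun[where z=z and w=w and l=l] by (simp add: poly_PP_sum)
    then show "(\<Sum>k\<le>2*l. \<Sum>k'\<le>2*l. M k k' * z^k * w^k') = 0"
      unfolding M_def using L R by (simp add: left_diff_distrib sum_subtractf)
  qed
  then show ?thesis unfolding M_def by simp
qed


lemma sumI0: "(\<Sum>n\<in>{-int l..int l}. g n) = (\<Sum>r\<in>{0..<2*l+1}. g (int r - int l))"
  using sumI[of g l] by (simp add: atLeast0LessThan)

lemma tau_alt: "tau l m n = complex_of_real (sqrt (FF l m / FF l n) * CC l n (nat (int l - m))) * (\<i>^(2*l)/2^l)"
  unfolding tau_def FF_def CC_def PP_def by simp

lemma phase: "(\<i>^(2*l)/2^l) * cnj (\<i>^(2*l)/2^l) = (1/4^l :: complex)"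
proof -
  have i: "\<i>^(2*l) = ((-1)::complex)^l" by (simp add: power_mult)
  have c: "cnj (\<i>^(2*l)/2^l) = ((-1::complex)^l/2^l)" by (simp add: power_mult)
  have "(\<i>^(2*l)/2^l) * cnj (\<i>^(2*l)/2^l) = ((-1::complex)^l/2^l) * ((-1)^l/2^l)" by (subst c) (simp only: i)
  also have "\<dots> = ((-1)*(-1))^l / (2*2)^l" by (simp only: power_mult_distrib times_divide_times_eq)
  also have "\<dots> = 1/4^l" by simp
  finally show ?thesis .
qed

lemma sqrt_div2: assumes "a \<ge> 0" "b \<ge> 0" "c > 0"
  shows "sqrt (a / c) * sqrt (b / c) = sqrt (a * b) / c"
proof -
  have "sqrt (a / c) * sqrt (b / c) = sqrt a * sqrt b / (sqrt c * sqrt c)"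
    by (simp add: real_sqrt_divide)
  also have "sqrt c * sqrt c = c" using assms by simp
  finally show ?thesis by (simp add: real_sqrt_mult)
qed

lemma FF_nonneg: "FF l n \<ge> 0" using FF_pos[of l n] by simp

lemma tau_row:
  assumes m: "m \<in> {-int l..int l}" and m': "m' \<in> {-int l..int l}"
  shows "(\<Sum>n\<in>{-int l..int l}. tau l m n * cnj (tau l m' n)) = (if m = m' then 1 else 0)"
proof -
  define k where "k = nat (int l - m)"
  define k' where "k' = nat (int l - m')"
  define X where "X = sqrt (FF l m * FF l m') / 4^l"
  have k: "k \<le> 2*l" and k': "k' \<le> 2*l" using m m' unfolding k_def k'_def by auto
  have tm: "tau l m n * cnj (tau l m' n) = complex_of_real (X * (CC l n k * CC l n k' / FF l n))" for n
  proof -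
    have "tau l m n * cnj (tau l m' n) = complex_of_real (sqrt (FF l m / FF l n) * sqrt (FF l m' / FF l n) * CC l n k * CC l n k')
          * ((\<i>^(2*l)/2^l) * cnj (\<i>^(2*l)/2^l))"
      unfolding tau_alt k_def k'_def by (simp add: mult_ac)
    also have "\<dots> = complex_of_real (sqrt (FF l m * FF l m') / FF l n * CC l n k * CC l n k') / 4^l"
      unfolding phase by (simp add: sqrt_div2 FF_nonneg FF_pos)
    also have "\<dots> = complex_of_real (X * (CC l n k * CC l n k' / FF l n))"
      unfolding X_def by (simp add: field_simps)
    finally show ?thesis .
  qed
  have "(\<Sum>n\<in>{-int l..int l}. tau l m n * cnj (tau l m' n)) = complex_of_real (X * (\<Sum>n\<in>{-int l..int l}. CC l n k * CC l n k' / FF l n))"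
    by (simp add: tm sum_distrib_left)
  also have "\<dots> = complex_of_real (X * (if k = k' then 4^l / (fact k * fact (2*l-k)) else 0))"
    by (simp add: CC_orth[OF k k'])
  also have "\<dots> = (if m = m' then 1 else 0)"
  proof (cases "m = m'")
    case True
    then have kk: "k = k'" unfolding k_def k'_def by simp
    have e: "2*l - nat (int l - m) = nat (int l + m)" using m by auto
    have f: "fact k * fact (2*l-k) = FF l m" unfolding FF_def k_def e ..
    have "X = FF l m / 4^l" unfolding X_def True using FF_nonneg[of l m'] by simp
    then show ?thesis using True kk f FF_pos[of l m] by simp
  next
    case False
    then have "k \<noteq> k'" unfolding k_def k'_def using m m' by auto
    then show ?thesis using False by simp
  qed
  finally show ?thesis .
qed

definition TT :: "nat \<Rightarrow> complex mat" where
  "TT l = mat (2*l+1) (2*l+1) (\<lambda>(r,c). tau l (int r - int l) (int c - int l))"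
definition TH :: "nat \<Rightarrow> complex mat" where
  "TH l = mat (2*l+1) (2*l+1) (\<lambda>(r,c). cnj (tau l (int c - int l) (int r - int l)))"

lemma TT_TH: "TT l * TH l = 1\<^sub>m (2*l+1)"
proof (rule eq_matI)
  fix r c assume r: "r < dim_row (1\<^sub>m (2*l+1))" and c: "c < dim_col (1\<^sub>m (2*l+1))"
  have "(TT l * TH l) $$ (r, c) = (\<Sum>i\<in>{0..<2*l+1}. tau l (int r - int l) (int i - int l) * cnj (tau l (int c - int l) (int i - int l)))"
    using r c by (simp add: TT_def TH_def scalar_prod_def)
  also have "\<dots> = (\<Sum>n\<in>{-int l..int l}. tau l (int r - int l) n * cnj (tau l (int c - int l) n))"
    by (simp add: sumI0)
  also have "\<dots> = (if r = c then 1 else 0)"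
    using r c by (subst tau_row) auto
  finally show "(TT l * TH l) $$ (r, c) = 1\<^sub>m (2*l+1) $$ (r, c)" using r c by simp
qed (auto simp: TT_def TH_def)

lemma TH_TT: "TH l * TT l = 1\<^sub>m (2*l+1)"
  by (rule mat_mult_left_right_inverse[OF _ _ TT_TH]) (auto simp: TT_def TH_def)

lemma tau_col:
  assumes n: "n \<in> {-int l..int l}" and n': "n' \<in> {-int l..int l}"
  shows "(\<Sum>m\<in>{-int l..int l}. cnj (tau l m n) * tau l m n') = (if n = n' then 1 else 0)"
proof -
  define r where "r = nat (n + int l)"
  define c where "c = nat (n' + int l)"
  have r: "r < 2*l+1" and c: "c < 2*l+1" using n n' unfolding r_def c_def by auto
  have rn: "int r - int l = n" and cn: "int c - int l = n'" using n n' unfolding r_def c_def by auto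
  have "(TH l * TT l) $$ (r, c) = 1\<^sub>m (2*l+1) $$ (r, c)" by (simp add: TH_TT)
  moreover have "(TH l * TT l) $$ (r, c) = (\<Sum>i\<in>{0..<2*l+1}. cnj (tau l (int i - int l) (int r - int l)) * tau l (int i - int l) (int c - int l))"
    using r c by (simp add: TT_def TH_def scalar_prod_def)
  moreover have "r = c \<longleftrightarrow> n = n'" using rn cn by auto
  ultimately show ?thesis using r c by (simp add: sumI0 rn cn)
qed

lemma tau_iso:
  "(\<Sum>m\<in>{-int l..int l}. (cmod (\<Sum>n\<in>{-int l..int l}. tau l m n * v n))^2) = (\<Sum>n\<in>{-int l..int l}. (cmod (v n))^2)"
proof -
  let ?I = "{-int l..int l}"
  have "complex_of_real (\<Sum>m\<in>?I. (cmod (\<Sum>n\<in>?I. tau l m n * v n))^2)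
      = (\<Sum>m\<in>?I. (\<Sum>n\<in>?I. tau l m n * v n) * cnj (\<Sum>n\<in>?I. tau l m n * v n))"
    by (simp only: of_real_sum complex_norm_square)
  also have "\<dots> = (\<Sum>m\<in>?I. \<Sum>n\<in>?I. \<Sum>n'\<in>?I. (v n * cnj (v n')) * (cnj (tau l m n') * tau l m n))"
    by (simp add: sum_product mult_ac)
  also have "\<dots> = (\<Sum>n\<in>?I. \<Sum>m\<in>?I. \<Sum>n'\<in>?I. (v n * cnj (v n')) * (cnj (tau l m n') * tau l m n))"
    by (rule sum.swap)
  also have "\<dots> = (\<Sum>n\<in>?I. \<Sum>n'\<in>?I. \<Sum>m\<in>?I. (v n * cnj (v n')) * (cnj (tau l m n') * tau l m n))"
    by (rule sum.cong[OF refl], rule sum.swap)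
  also have "\<dots> = (\<Sum>n\<in>?I. \<Sum>n'\<in>?I. (v n * cnj (v n')) * (if n' = n then 1 else 0))"
    by (intro sum.cong refl) (simp add: sum_distrib_left[symmetric] tau_col)
  also have "\<dots> = (\<Sum>n\<in>?I. v n * cnj (v n))"
    by (simp add: if_distrib[where f="\<lambda>x. _ * x"] cong: if_cong)
  also have "\<dots> = complex_of_real (\<Sum>n\<in>?I. (cmod (v n))^2)"
    by (simp only: of_real_sum complex_norm_square)
  finally show ?thesis using of_real_eq_iff by blast
qed

lemma tau_inj:
  assumes "\<And>h. h \<in> {-int l..int l} \<Longrightarrow> (\<Sum>n\<in>{-int l..int l}. tau l h n * v n) = 0"
    and "n \<in> {-int l..int l}"
  shows "v n = 0"
proof -
  have "(\<Sum>n\<in>{-int l..int l}. (cmod (v n))^2) = 0"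
    using tau_iso[of l v] assms(1) by simp
  then have "(cmod (v n))^2 = 0" using assms(2)
    by (subst (asm) sum_nonneg_eq_0_iff) auto
  then show ?thesis by simp
qed

lemma CC_neg:
  assumes n: "n \<in> {-int l..int l}" and k: "k \<le> 2*l"
  shows "CC l (-n) k = (-1)^k * CC l n k"
proof -
  have mn: "-n \<in> {-int l..int l}" using n by auto
  have "\<forall>x. (\<Sum>k\<le>2*l. CC l (-n) k * x^k) = (\<Sum>k\<le>2*l. ((-1)^k * CC l n k) * x^k)"
  proof
    fix x :: real
    have "(\<Sum>k\<le>2*l. ((-1)^k * CC l n k) * x^k) = (\<Sum>k\<le>2*l. CC l n k * (-x)^k)"
    proof (intro sum.cong refl)
      fix k
      have "(-x)^k = (-1)^k * x^k" by (rule power_minus)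
      then show "((-1)^k * CC l n k) * x^k = CC l n k * (-x)^k" by (simp only: mult_ac)
    qed
    also have "\<dots> = (1 + - x) ^ nat (int l - n) * (- x - 1) ^ nat (int l + n)"
      by (rule poly_PP_sum[OF n])
    also have "1 + - x = (-1) * (x - 1)" by simp
    also have "- x - 1 = (-1) * (1 + x)" by simp
    also have "((-1) * (x - 1)) ^ nat (int l - n) * ((-1) * (1 + x)) ^ nat (int l + n)
        = ((-1) ^ nat (int l - n) * (-1) ^ nat (int l + n)) * ((x - 1) ^ nat (int l - n) * (1 + x) ^ nat (int l + n))"
      by (simp only: power_mult_distrib mult_ac)
    also have "(-1::real) ^ nat (int l - n) * (-1) ^ nat (int l + n) = (-1) ^ (nat (int l - n) + nat (int l + n))"
      by (simp only: power_add)
    also have "nat (int l - n) + nat (int l + n) = 2 * l" using n by auto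
    also have "(-1::real) ^ (2*l) = 1" by (simp only: power_mult) simp
    also have "(\<Sum>k\<le>2*l. CC l (-n) k * x^k) = (1 + x) ^ nat (int l - - n) * (x - 1) ^ nat (int l + - n)"
      by (rule poly_PP_sum[OF mn])
    ultimately show "(\<Sum>k\<le>2*l. CC l (-n) k * x^k) = (\<Sum>k\<le>2*l. ((-1)^k * CC l n k) * x^k)"
      by (simp add: mult_ac)
  qed
  from polyfun_eq_coeffs[THEN iffD1, OF this] k show ?thesis by simp
qed

lemma FF_neg: "FF l (-n) = FF l n" unfolding FF_def by (simp add: mult_ac)

lemma tau_neg:
  assumes m: "m \<in> {-int l..int l}" and n: "n \<in> {-int l..int l}"
  shows "tau l m (-n) = (-1) ^ nat (int l - m) * tau l m n"
proof -
  have k: "nat (int l - m) \<le> 2*l" using m by auto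
  show ?thesis unfolding tau_alt FF_neg CC_neg[OF n k] by simp
qed

lemma CC_00: "CC l 0 0 = (-1)^l"
proof -
  have "(\<Sum>k\<le>2*l. CC l 0 k * 0^k) = (1 + 0) ^ nat (int l - 0) * (0 - 1) ^ nat (int l + 0)"
    by (rule poly_PP_sum) auto
  moreover have "(\<Sum>k\<le>2*l. CC l 0 k * (0::real)^k) = CC l 0 0"
    by (simp add: power_0_left if_distrib[where f="\<lambda>x. _ * x"] cong: if_cong)
  ultimately show ?thesis by simp
qed

lemma tau_l0: "tau l (int l) 0 \<noteq> 0"
proof -
  have "sqrt (FF l (int l) / FF l 0) > 0" using FF_pos[of l] by simp
  moreover have "CC l 0 (nat (int l - int l)) \<noteq> 0" using CC_00[of l] by simp
  ultimately show ?thesis unfolding tau_alt using FF_pos[of l "int l"] FF_pos[of l 0] by simp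
qed

lemma laurent_zero:
  fixes a :: "int \<Rightarrow> complex" and M :: nat
  assumes "\<And>\<omega>. \<omega> \<noteq> 0 \<Longrightarrow> (\<Sum>k\<in>{-int M..int M}. a k * \<omega> powi k) = 0"
    and k: "k \<in> {-int M..int M}"
  shows "a k = 0"
proof -
  define p where "p = (\<Sum>i\<le>2*M. monom (a (int i - int M)) i)"
  have cp: "coeff p i = (if i \<le> 2*M then a (int i - int M) else 0)" for i
    unfolding p_def by (simp add: coeff_sum coeff_monom)
  have root: "poly p \<omega> = 0" if w: "\<omega> \<noteq> 0" for \<omega>
  proof -
    have "poly p \<omega> = (\<Sum>i\<le>2*M. a (int i - int M) * \<omega> ^ i)"
      unfolding p_def by (simp add: poly_sum poly_monom)
    also have "\<dots> = (\<Sum>k\<in>{-int M..int M}. a k * \<omega> powi k * \<omega> ^ M)"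
    proof (rule sum.reindex_bij_witness[where j="\<lambda>i. int i - int M" and i="\<lambda>k. nat (k + int M)"])
      fix i assume i: "i \<in> {..2*M}"
      have "\<omega> powi (int i - int M) * \<omega> ^ M = \<omega> ^ i"
        using w by (simp add: power_int_diff)
      then show "a (int i - int M) * \<omega> powi (int i - int M) * \<omega> ^ M = a (int i - int M) * \<omega> ^ i"
        by (simp add: mult.assoc)
    qed auto
    also have "\<dots> = (\<Sum>k\<in>{-int M..int M}. a k * \<omega> powi k) * \<omega> ^ M"
      by (simp add: sum_distrib_right)
    also have "\<dots> = 0" using assms(1)[OF w] by simp
    finally show ?thesis .
  qed
  have "p = 0"
  proof (rule ccontr)
    assume "p \<noteq> 0"
    then have "finite {x. poly p x = 0}" by (rule poly_roots_finite)
    moreover have "UNIV - {0} \<subseteq> {x. poly p x = 0}" using root by auto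
    moreover have "infinite (UNIV - {0::complex})"
      by (simp add: infinite_UNIV_char_0)
    ultimately show False using finite_subset by blast
  qed
  then have "coeff p (nat (k + int M)) = 0" by simp
  moreover have "int (nat (k + int M)) - int M = k" "nat (k + int M) \<le> 2*M" using k by auto
  ultimately show ?thesis using cp[of "nat (k + int M)"] by simp
qed


lemma beta_in: "h \<in> {-int l..int l} \<Longrightarrow> beta l A h k = (\<Sum>n\<in>{-int l..int l}. tau l h n * A n (k - n))"
  unfolding beta_def by simp

lemma in_PlD: "in_Pl l A \<Longrightarrow> A n j \<noteq> 0 \<Longrightarrow> n \<in> {-int l..int l} \<and> j \<in> {-(int l - 1)..int l - 1}"
  unfolding in_Pl_def by blast

lemma sum_neg_idx: "(\<Sum>n\<in>{-int l..int l}. f (-n)) = (\<Sum>n\<in>{-int l..int l}. f n)"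
  by (rule sum.reindex_bij_witness[where i=uminus and j=uminus]) auto

lemma neg1_pow_parity:
  assumes h: "h \<in> {-int l..int l}" and e: "even (h + j)"
  shows "(-1::complex) ^ nat (int l - h) = (if even (int l + j) then 1 else -1)"
proof -
  have "even (nat (int l - h)) \<longleftrightarrow> even (int l - h)" using h by (simp add: even_nat_iff)
  also have "\<dots> \<longleftrightarrow> even (int l + j)" using e by presburger
  finally show ?thesis by (cases "even (nat (int l - h))") (auto simp: neg_one_even_power neg_one_odd_power)
qed

lemma key:
  assumes l1: "l \<ge> 1" and P: "in_Pl l A" and c: "c \<noteq> 0"
    and odd: "\<And>h k. h \<in> {-int l..int l} \<Longrightarrow> odd k \<Longrightarrow> beta l A h k = 0"
    and ev: "\<And>h j. h \<in> {-int l..int l} \<Longrightarrow> beta l A h (2*j) = c * A h j"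
  shows "A = (\<lambda>h j. 0)"
proof -
  let ?I = "{-int l..int l}"
  have R1: "even (n + j)" if nz: "A n j \<noteq> 0" for n j
  proof (rule ccontr)
    assume o: "odd (n + j)"
    have "A n ((n + j) - n) = 0"
    proof (rule tau_inj[where v="\<lambda>n'. A n' ((n + j) - n')"])
      fix h assume "h \<in> ?I"
      then show "(\<Sum>n'\<in>?I. tau l h n' * A n' ((n + j) - n')) = 0"
        using odd[OF _ o] by (simp add: beta_in)
    next
      show "n \<in> ?I" using in_PlD[OF P nz] by simp
    qed
    then show False using nz by simp
  qed
  have R1': "\<exists>h\<in>?I. A h ((n + j) div 2) \<noteq> 0" if nz: "A n j \<noteq> 0" for n j
  proof (rule ccontr)
    assume "\<not> ?thesis"
    then have z: "\<And>h. h \<in> ?I \<Longrightarrow> A h ((n + j) div 2) = 0" by auto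
    have e2: "2 * ((n + j) div 2) = n + j" using R1[OF nz] by simp
    have "A n (2 * ((n + j) div 2) - n) = 0"
    proof (rule tau_inj[where v="\<lambda>n'. A n' (2 * ((n + j) div 2) - n')"])
      fix h assume h: "h \<in> ?I"
      show "(\<Sum>n'\<in>?I. tau l h n' * A n' (2 * ((n + j) div 2) - n')) = 0"
        using ev[OF h, of "(n + j) div 2"] z[OF h] by (simp add: beta_in[OF h])
    next
      show "n \<in> ?I" using in_PlD[OF P nz] by simp
    qed
    then show False using nz e2 by simp
  qed
  define s where "s = (\<lambda>j::int. if even (int l + j) then (1::complex) else -1)"
  have s0: "s j \<noteq> 0" for j unfolding s_def by simp
  have R2: "A (-n) (2*j + n) = s j * A n (2*j - n)" if n: "n \<in> ?I" for n j
  proof -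
    have "A (-n) (2*j - (-n)) - s j * A n (2*j - n) = 0"
    proof (rule tau_inj[where v="\<lambda>n. A (-n) (2*j - (-n)) - s j * A n (2*j - n)"])
      fix h assume h: "h \<in> ?I"
      have "(\<Sum>n\<in>?I. tau l h n * A (-n) (2*j - (-n))) = (\<Sum>n\<in>?I. tau l h (-n) * A n (2*j - n))"
        using sum_neg_idx[of "\<lambda>n. tau l h (-n) * A n (2*j - n)" l] by simp
      also have "\<dots> = (-1) ^ nat (int l - h) * (\<Sum>n\<in>?I. tau l h n * A n (2*j - n))"
        by (simp add: tau_neg[OF h] sum_distrib_left mult_ac)
      also have "\<dots> = (-1) ^ nat (int l - h) * (c * A h j)"
        using ev[OF h, of j] by (simp add: beta_in[OF h])
      also have "\<dots> = s j * (c * A h j)"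
      proof (cases "A h j = 0")
        case False
        show ?thesis unfolding s_def using neg1_pow_parity[OF h R1[OF False]] by simp
      qed simp
      also have "\<dots> = s j * (\<Sum>n\<in>?I. tau l h n * A n (2*j - n))"
        using ev[OF h, of j] by (simp add: beta_in[OF h])
      finally show "(\<Sum>n\<in>?I. tau l h n * (A (-n) (2*j - (-n)) - s j * A n (2*j - n))) = 0"
        by (simp add: right_diff_distrib sum_subtractf sum_distrib_left mult_ac)
    qed (rule n)
    then show ?thesis by simp
  qed
  have exn: "\<exists>n\<in>?I. A n (2*j - n) \<noteq> 0" if nz: "A h j \<noteq> 0" for h j
  proof -
    have h: "h \<in> ?I" using in_PlD[OF P nz] by simp
    have "beta l A h (2*j) \<noteq> 0" using ev[OF h, of j] nz c by simp
    then have "(\<Sum>n\<in>?I. tau l h n * A n (2*j - n)) \<noteq> 0" by (simp add: beta_in[OF h])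
    then obtain n where "n \<in> ?I" "tau l h n * A n (2*j - n) \<noteq> 0" by (meson sum.neutral)
    then show ?thesis by auto
  qed
  define S where "S = {(n, j). A n j \<noteq> 0}"
  have finS: "finite S"
  proof (rule finite_subset)
    show "S \<subseteq> ?I \<times> {-(int l - 1)..int l - 1}" unfolding S_def using in_PlD[OF P] by auto
  qed auto
  have supp: "A n j \<noteq> 0 \<Longrightarrow> n = 0 \<and> j = 0" if ne: "S \<noteq> {}" for n j
  proof -
    define D where "D = snd ` S"
    have finD: "finite D" "D \<noteq> {}" using finS ne unfolding D_def by auto
    have inD: "A n j \<noteq> 0 \<Longrightarrow> j \<in> D" for n j unfolding D_def S_def by force
    define d where "d = Max D"
    define e where "e = Min D"
    have dD: "d \<in> D" and eD: "e \<in> D" unfolding d_def e_def using finD by auto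
    have led: "A n j \<noteq> 0 \<Longrightarrow> j \<le> d" for n j unfolding d_def using inD finD by auto
    have gee: "A n j \<noteq> 0 \<Longrightarrow> e \<le> j" for n j unfolding e_def using inD finD by auto
    have "d \<le> 0"
    proof -
      obtain n0 where "A n0 d \<noteq> 0" using dD unfolding D_def S_def by auto
      then obtain n where n: "n \<in> ?I" and nz: "A n (2*d - n) \<noteq> 0" using exn by blast
      have "2*d - n \<le> d" using led[OF nz] .
      moreover have "A (-n) (2*d + n) \<noteq> 0" using R2[OF n, of d] nz s0 by simp
      then have "2*d + n \<le> d" using led by blast
      ultimately show ?thesis by simp
    qed
    moreover have "e \<ge> 0"
    proof -
      obtain n0 where "A n0 e \<noteq> 0" using eD unfolding D_def S_def by auto
      then obtain n where n: "n \<in> ?I" and nz: "A n (2*e - n) \<noteq> 0" using exn by blast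
      have "e \<le> 2*e - n" using gee[OF nz] .
      moreover have "A (-n) (2*e + n) \<noteq> 0" using R2[OF n, of e] nz s0 by simp
      then have "e \<le> 2*e + n" using gee by blast
      ultimately show ?thesis by simp
    qed
    ultimately have j0: "A n j \<noteq> 0 \<Longrightarrow> j = 0" for n j using led gee by force
    assume nz: "A n j \<noteq> 0"
    have j: "j = 0" using j0[OF nz] .
    obtain h where "h \<in> ?I" "A h ((n + j) div 2) \<noteq> 0" using R1'[OF nz] by blast
    then have "(n + j) div 2 = 0" using j0 by blast
    moreover have "even (n + j)" using R1[OF nz] .
    ultimately show ?thesis using j by auto
  qed
  show ?thesis
  proof (cases "S = {}")
    case True
    then show ?thesis unfolding S_def by auto
  next
    case False
    have lI: "int l \<in> ?I" by simp
    have "A (int l) 0 = 0" using supp[OF False, of "int l" 0] l1 by auto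
    then have "beta l A (int l) (2*0) = 0" using ev[OF lI, of 0] by simp
    then have "(\<Sum>n\<in>?I. tau l (int l) n * A n (0 - n)) = 0" by (simp add: beta_in[OF lI])
    moreover have "(\<Sum>n\<in>?I. tau l (int l) n * A n (0 - n)) = tau l (int l) 0 * A 0 0"
    proof -
      have "(\<Sum>n\<in>?I. tau l (int l) n * A n (0 - n)) = (\<Sum>n\<in>?I. if n = 0 then tau l (int l) 0 * A 0 0 else 0)"
        by (intro sum.cong refl) (use supp[OF False] in force)
      then show ?thesis by simp
    qed
    ultimately have "A 0 0 = 0" using tau_l0[of l] by simp
    then have "S = {}" unfolding S_def using supp[OF False] by force
    then show ?thesis using False by simp
  qed
qed


lemma beta_out:
  assumes P: "in_Pl l A" and k: "\<not> (-(2*int l - 1) \<le> k \<and> k \<le> 2*int l - 1)"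
  shows "beta l A h k = 0"
proof -
  have "A n (k - n) = 0" if "n \<in> {-int l..int l}" for n
  proof (rule ccontr)
    assume "A n (k - n) \<noteq> 0"
    from in_PlD[OF P this] that k show False by auto
  qed
  then show ?thesis unfolding beta_def by simp
qed

lemma shift_gen:
  assumes n: "n \<in> {-int l..int l}"
    and z: "\<And>k. k \<in> {-(2*int l)..2*int l} \<Longrightarrow> k - n \<notin> {-(int l - 1)..int l - 1} \<Longrightarrow> F k = 0"
  shows "(\<Sum>k\<in>{-(2*int l)..2*int l}. F k) = (\<Sum>j\<in>{-(int l - 1)..int l - 1}. F (j + n))"
proof -
  let ?J = "{-(int l - 1)..int l - 1}" and ?K = "{-(2*int l)..2*int l}"
  have "(\<Sum>j\<in>?J. F (j + n)) = (\<Sum>k\<in>(\<lambda>j. j + n) ` ?J. F k)"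
    by (subst sum.reindex) (auto simp: inj_on_def)
  also have "\<dots> = (\<Sum>k\<in>?K. F k)"
  proof (rule sum.mono_neutral_left)
    show "(\<lambda>j. j + n) ` ?J \<subseteq> ?K" using n by auto
    show "\<forall>i\<in>?K - (\<lambda>j. j + n) ` ?J. F i = 0"
    proof
      fix i assume "i \<in> ?K - (\<lambda>j. j + n) ` ?J"
      then have "i \<in> ?K" "i - n \<notin> ?J" by (auto simp: image_iff)
      then show "F i = 0" using z by blast
    qed
  qed auto
  finally show ?thesis by simp
qed

lemma TA_expand:
  assumes P: "in_Pl l A" and h: "h \<in> {-int l..int l}" and w: "\<omega> \<noteq> 0"
  shows "(\<Sum>n\<in>{-int l..int l}. tau l h n * \<omega> powi n * evalA l A \<omega> n)
       = (\<Sum>k\<in>{-(2*int l)..2*int l}. beta l A h k * \<omega> powi k)"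
proof -
  let ?I = "{-int l..int l}" and ?J = "{-(int l - 1)..int l - 1}" and ?K = "{-(2*int l)..2*int l}"
  have "(\<Sum>k\<in>?K. beta l A h k * \<omega> powi k) = (\<Sum>k\<in>?K. \<Sum>n\<in>?I. tau l h n * (A n (k - n) * \<omega> powi k))"
    by (simp add: beta_in[OF h] sum_distrib_right sum_distrib_left mult_ac)
  also have "\<dots> = (\<Sum>n\<in>?I. tau l h n * (\<Sum>k\<in>?K. A n (k - n) * \<omega> powi k))"
    by (subst sum.swap) (simp add: sum_distrib_left)
  also have "\<dots> = (\<Sum>n\<in>?I. tau l h n * (\<Sum>j\<in>?J. A n j * \<omega> powi (j + n)))"
  proof (rule sum.cong[OF refl])
    fix n assume n: "n \<in> ?I"
    have "(\<Sum>k\<in>?K. A n (k - n) * \<omega> powi k) = (\<Sum>j\<in>?J. A n (j + n - n) * \<omega> powi (j + n))"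
      by (rule shift_gen[OF n]) (use P in \<open>auto simp: in_Pl_def\<close>)
    then show "tau l h n * (\<Sum>k\<in>?K. A n (k - n) * \<omega> powi k) = tau l h n * (\<Sum>j\<in>?J. A n j * \<omega> powi (j + n))"
      by simp
  qed
  also have "\<dots> = (\<Sum>n\<in>?I. tau l h n * \<omega> powi n * evalA l A \<omega> n)"
    unfolding evalA_def using w by (simp add: power_int_add sum_distrib_left mult_ac)
  finally show ?thesis by simp
qed

lemma split_K:
  "(\<Sum>k\<in>{-(2*int l)..2*int l}. f k) = (\<Sum>j\<in>{-int l..int l}. f (2*j)) + (\<Sum>j\<in>{-int l..int l - 1}. f (2*j+1))"
proof -
  let ?K = "{-(2*int l)..2*int l}"
  let ?E = "(\<lambda>j. 2*j) ` {-int l..int l}" and ?O = "(\<lambda>j. 2*j+1) ` {-int l..int l - 1}"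
  have KEO: "?K = ?E \<union> ?O"
  proof (rule subset_antisym)
    show "?K \<subseteq> ?E \<union> ?O"
    proof
      fix k assume k: "k \<in> ?K"
      show "k \<in> ?E \<union> ?O"
      proof (cases "even k")
        case True
        then have "k = 2 * (k div 2)" by simp
        moreover have "k div 2 \<in> {-int l..int l}" using k by auto
        ultimately show ?thesis by blast
      next
        case False
        then have "k = 2 * (k div 2) + 1" by presburger
        moreover have "k div 2 \<in> {-int l..int l - 1}" using k False by auto presburger+
        ultimately show ?thesis by blast
      qed
    qed
    show "?E \<union> ?O \<subseteq> ?K" by auto
  qed
  have disj: "?E \<inter> ?O = {}" by auto presburger
  have "(\<Sum>k\<in>?K. f k) = (\<Sum>k\<in>?E. f k) + (\<Sum>k\<in>?O. f k)"
    unfolding KEO by (rule sum.union_disjoint) (use disj in auto)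
  also have "(\<Sum>k\<in>?E. f k) = (\<Sum>j\<in>{-int l..int l}. f (2*j))"
    by (subst sum.reindex) (auto simp: inj_on_def)
  also have "(\<Sum>k\<in>?O. f k) = (\<Sum>j\<in>{-int l..int l - 1}. f (2*j+1))"
    by (subst sum.reindex) (auto simp: inj_on_def)
  finally show ?thesis .
qed

lemma evalA_ext:
  assumes P: "in_Pl l A" and h: "h \<in> {-int l..int l}"
  shows "evalA l A \<omega> h = (\<Sum>j\<in>{-int l..int l}. A h j * \<omega> powi j)"
  unfolding evalA_def
proof (rule sum.mono_neutral_left)
  show "\<forall>i\<in>{-int l..int l} - {-(int l - 1)..int l - 1}. A h i * \<omega> powi i = 0"
    using P unfolding in_Pl_def by auto
qed auto

lemma powi_2j: "(\<omega>::complex) powi (2*j) = (\<omega>^2) powi j"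
  by (simp add: power_int_mult)

lemma powi_j2: "(\<omega>::complex) powi (j*2) = (\<omega>^2) powi j"
  using powi_2j[of \<omega> j] by (simp add: mult.commute)

lemma part2:
  assumes l1: "l \<ge> 1" and c: "c \<noteq> 0" and P: "in_Pl l A"
    and hyp: "\<forall>\<omega> :: complex. \<omega> \<noteq> 0 \<longrightarrow>
              (\<forall>h\<in>{-int l..int l}. (\<Sum>n\<in>{-int l..int l}. tau l h n * \<omega> powi n * evalA l A \<omega> n)
                                   = c * evalA l A (\<omega>\<^sup>2) h)"
  shows "A = (\<lambda>h j. 0)"
proof -
  let ?I = "{-int l..int l}" and ?K = "{-(2*int l)..2*int l}"
  have dz: "beta l A h k - (if even k then c * A h (k div 2) else 0) = 0" if h: "h \<in> ?I" and k: "k \<in> ?K" for h k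
  proof -
    define d where "d = (\<lambda>k. beta l A h k - (if even k then c * A h (k div 2) else 0))"
    have "d k = 0"
    proof (rule laurent_zero[where M="2*l"])
      fix \<omega> :: complex assume w: "\<omega> \<noteq> 0"
      have "(\<Sum>k\<in>?K. (if even k then c * A h (k div 2) else 0) * \<omega> powi k)
          = (\<Sum>j\<in>{-int l..int l}. (if even (2*j) then c * A h (2*j div 2) else 0) * \<omega> powi (2*j))
          + (\<Sum>j\<in>{-int l..int l - 1}. (if even (2*j+1) then c * A h ((2*j+1) div 2) else 0) * \<omega> powi (2*j+1))"
        by (rule split_K)
      also have "\<dots> = (\<Sum>j\<in>{-int l..int l}. c * (A h j * (\<omega>^2) powi j))"
        by (simp add: powi_2j powi_j2 mult_ac)
      also have "\<dots> = c * evalA l A (\<omega>\<^sup>2) h"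
        by (simp add: evalA_ext[OF P h] sum_distrib_left)
      finally have e: "(\<Sum>k\<in>?K. (if even k then c * A h (k div 2) else 0) * \<omega> powi k) = c * evalA l A (\<omega>\<^sup>2) h" .
      have "(\<Sum>k\<in>?K. d k * \<omega> powi k) = (\<Sum>k\<in>?K. beta l A h k * \<omega> powi k) - (\<Sum>k\<in>?K. (if even k then c * A h (k div 2) else 0) * \<omega> powi k)"
        unfolding d_def by (simp add: left_diff_distrib sum_subtractf)
      also have "\<dots> = 0" unfolding e TA_expand[OF P h w, symmetric] using hyp w h by simp
      finally show "(\<Sum>k\<in>{-int (2*l)..int (2*l)}. d k * \<omega> powi k) = 0" by simp
    next
      show "k \<in> {-int (2*l)..int (2*l)}" using k by simp
    qed
    then show ?thesis unfolding d_def .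
  qed
  show ?thesis
  proof (rule key[OF l1 P c])
    fix h k :: int assume h: "h \<in> ?I" and k: "odd k"
    show "beta l A h k = 0"
    proof (cases "k \<in> ?K")
      case True with dz[OF h True] k show ?thesis by simp
    next
      case False then show ?thesis by (intro beta_out[OF P]) auto
    qed
  next
    fix h j :: int assume h: "h \<in> ?I"
    show "beta l A h (2*j) = c * A h j"
    proof (cases "2*j \<in> ?K")
      case True with dz[OF h True] show ?thesis by simp
    next
      case False
      then have "beta l A h (2*j) = 0" by (intro beta_out[OF P]) auto
      moreover have "A h j = 0" using False P unfolding in_Pl_def by auto
      ultimately show ?thesis by simp
    qed
  qed
qed


definition pos :: "nat \<Rightarrow> int \<Rightarrow> int \<Rightarrow> nat" where
  "pos l h j = nat ((h + int l) * (2*int l - 1) + (j + int l - 1))"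

definition arr :: "nat \<Rightarrow> complex vec \<Rightarrow> (int \<Rightarrow> int \<Rightarrow> complex)" where
  "arr l v = (\<lambda>h j. if h \<in> {-int l..int l} \<and> j \<in> {-(int l - 1)..int l - 1} then v $ pos l h j else 0)"

definition vec_of :: "nat \<Rightarrow> (int \<Rightarrow> int \<Rightarrow> complex) \<Rightarrow> complex vec" where
  "vec_of l A = vec (dimPl l) (\<lambda>r. A (idx_h l r) (idx_j l r))"

lemma int_d: "l \<ge> 1 \<Longrightarrow> int (2*l - 1) = 2*int l - 1" by simp

lemma idx_range:
  assumes l: "l \<ge> 1" and r: "r < dimPl l"
  shows "idx_h l r \<in> {-int l..int l}" "idx_j l r \<in> {-(int l - 1)..int l - 1}"
proof -
  have d: "2*l - 1 > 0" using l by simp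
  have "r div (2*l - 1) < 2*l + 1" using r d unfolding dimPl_def by (simp add: div_less_iff_less_mult)
  then have q: "int (r div (2*l - 1)) \<le> 2 * int l" by linarith
  show "idx_h l r \<in> {-int l..int l}" unfolding idx_h_def using q by simp
  have "r mod (2*l - 1) < 2*l - 1" using d by simp
  then have "int (r mod (2*l - 1)) < int (2*l - 1)" by linarith
  then have "int (r mod (2*l - 1)) < 2*int l - 1" using int_d[OF l] by simp
  then show "idx_j l r \<in> {-(int l - 1)..int l - 1}" unfolding idx_j_def by simp
qed

lemma pos_idx:
  assumes l: "l \<ge> 1" and r: "r < dimPl l"
  shows "pos l (idx_h l r) (idx_j l r) = r"
proof -
  have "(idx_h l r + int l) * (2*int l - 1) + (idx_j l r + int l - 1)
      = int (r div (2*l - 1)) * int (2*l - 1) + int (r mod (2*l - 1))"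
    unfolding idx_h_def idx_j_def int_d[OF l] by simp
  also have "\<dots> = int (r div (2*l - 1) * (2*l - 1) + r mod (2*l - 1))" by simp
  also have "r div (2*l - 1) * (2*l - 1) + r mod (2*l - 1) = r" by (rule div_mult_mod_eq)
  finally show ?thesis unfolding pos_def by simp
qed

lemma idx_pos:
  assumes l: "l \<ge> 1" and h: "h \<in> {-int l..int l}" and j: "j \<in> {-(int l - 1)..int l - 1}"
  shows "pos l h j < dimPl l" "idx_h l (pos l h j) = h" "idx_j l (pos l h j) = j"
proof -
  define q where "q = nat (h + int l)"
  define m where "m = nat (j + int l - 1)"
  define d where "d = 2*l - 1"
  have d0: "d > 0" using l unfolding d_def by simp
  have qi: "int q = h + int l" using h unfolding q_def by simp
  have mi: "int m = j + int l - 1" using j unfolding m_def by simp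
  have md: "m < d" using j l unfolding m_def d_def by auto
  have q2: "q \<le> 2*l" using h unfolding q_def by auto
  have p: "pos l h j = q * d + m"
  proof -
    have "(h + int l) * (2*int l - 1) + (j + int l - 1) = int q * int d + int m"
      using qi mi int_d[OF l] unfolding d_def by simp
    also have "\<dots> = int (q * d + m)" by simp
    finally have e: "(h + int l) * (2*int l - 1) + (j + int l - 1) = int (q * d + m)" .
    show ?thesis unfolding pos_def e by (rule nat_int)
  qed
  have dv: "(q * d + m) div d = q" using md d0 by simp
  have mo: "(q * d + m) mod d = m" using md d0 by simp
  have "q * d + m < q * d + d" using md by simp
  also have "\<dots> = (q + 1) * d" by simp
  also have "\<dots> \<le> (2*l + 1) * d" using q2 by (intro mult_right_mono) auto
  finally show "pos l h j < dimPl l" unfolding p dimPl_def d_def .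
  show "idx_h l (pos l h j) = h" unfolding idx_h_def p using dv qi unfolding d_def by simp
  show "idx_j l (pos l h j) = j" unfolding idx_j_def p using mo mi unfolding d_def by simp
qed

lemma basis_alt:
  assumes l: "l \<ge> 1" and c: "c < dimPl l"
  shows "basisPl l c h j = (if h \<in> {-int l..int l} \<and> j \<in> {-(int l - 1)..int l - 1} \<and> c = pos l h j then 1 else 0)"
proof -
  have "(h = idx_h l c \<and> j = idx_j l c) \<longleftrightarrow> (h \<in> {-int l..int l} \<and> j \<in> {-(int l - 1)..int l - 1} \<and> c = pos l h j)"
  proof
    assume a: "h = idx_h l c \<and> j = idx_j l c"
    then show "h \<in> {-int l..int l} \<and> j \<in> {-(int l - 1)..int l - 1} \<and> c = pos l h j"
      using idx_range[OF l c] pos_idx[OF l c] by auto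
  next
    assume a: "h \<in> {-int l..int l} \<and> j \<in> {-(int l - 1)..int l - 1} \<and> c = pos l h j"
    then show "h = idx_h l c \<and> j = idx_j l c" using idx_pos[OF l] by auto
  qed
  then show ?thesis unfolding basisPl_def by simp
qed

lemma arr_sum:
  assumes l: "l \<ge> 1"
  shows "arr l v h j = (\<Sum>c\<in>{0..<dimPl l}. v $ c * basisPl l c h j)"
proof -
  have "(\<Sum>c\<in>{0..<dimPl l}. v $ c * basisPl l c h j)
      = (\<Sum>c\<in>{0..<dimPl l}. if h \<in> {-int l..int l} \<and> j \<in> {-(int l - 1)..int l - 1} \<and> c = pos l h j then v $ c else 0)"
    by (intro sum.cong refl) (simp add: basis_alt[OF l])
  also have "\<dots> = arr l v h j"
  proof (cases "h \<in> {-int l..int l} \<and> j \<in> {-(int l - 1)..int l - 1}")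
    case True
    then have "pos l h j < dimPl l" using idx_pos[OF l] by auto
    then show ?thesis using True unfolding arr_def by simp
  next
    case False
    have c0: "\<And>c. (h \<in> {-int l..int l} \<and> j \<in> {-(int l - 1)..int l - 1} \<and> c = pos l h j) = False"
      using False by auto
    have c1: "(h \<in> {-int l..int l} \<and> j \<in> {-(int l - 1)..int l - 1}) = False"
      using False by auto
    show ?thesis unfolding arr_def by (simp only: c0 c1 if_False sum.neutral_const)
  qed
  finally show ?thesis by simp
qed

lemma Sop_lin:
  assumes "finite C"
  shows "Sop l (\<lambda>h j. \<Sum>c\<in>C. a c * f c h j) h j = (\<Sum>c\<in>C. a c * Sop l (f c) h j)"
proof (cases "h \<in> {-int l..int l}")
  case True
  let ?I = "{-int l..int l}"
  have "Sop l (\<lambda>h j. \<Sum>c\<in>C. a c * f c h j) h j = (\<Sum>n\<in>?I. \<Sum>c\<in>C. tau l h n * (a c * f c n (2*j - n)))"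
    unfolding Sop_def beta_def using True by (simp add: sum_distrib_left)
  also have "\<dots> = (\<Sum>c\<in>C. \<Sum>n\<in>?I. tau l h n * (a c * f c n (2*j - n)))"
    by (rule sum.swap)
  also have "\<dots> = (\<Sum>c\<in>C. a c * Sop l (f c) h j)"
    unfolding Sop_def beta_def using True by (simp add: sum_distrib_left mult_ac)
  finally show ?thesis .
next
  case False
  then show ?thesis unfolding Sop_def beta_def by (simp del: atLeastAtMost_iff)
qed

lemma S_mat_carrier: "S_mat l \<in> carrier_mat (dimPl l) (dimPl l)"
  unfolding S_mat_def by simp

lemma Smat_vec:
  assumes l: "l \<ge> 1" and v: "v \<in> carrier_vec (dimPl l)"
  shows "S_mat l *\<^sub>v v = vec_of l (Sop l (arr l v))"
proof (rule eq_vecI)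
  show "dim_vec (S_mat l *\<^sub>v v) = dim_vec (vec_of l (Sop l (arr l v)))"
    unfolding vec_of_def S_mat_def by simp
  fix r assume "r < dim_vec (vec_of l (Sop l (arr l v)))"
  then have r: "r < dimPl l" unfolding vec_of_def by simp
  have dv: "dim_vec v = dimPl l" using v by simp
  have "(S_mat l *\<^sub>v v) $ r = (\<Sum>c\<in>{0..<dimPl l}. Sop l (basisPl l c) (idx_h l r) (idx_j l r) * v $ c)"
    using r dv unfolding S_mat_def by (simp add: scalar_prod_def)
  also have "\<dots> = (\<Sum>c\<in>{0..<dimPl l}. v $ c * Sop l (basisPl l c) (idx_h l r) (idx_j l r))"
    by (simp add: mult.commute)
  also have "\<dots> = Sop l (\<lambda>h j. \<Sum>c\<in>{0..<dimPl l}. v $ c * basisPl l c h j) (idx_h l r) (idx_j l r)"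
    by (rule Sop_lin[symmetric]) simp
  also have "(\<lambda>h j. \<Sum>c\<in>{0..<dimPl l}. v $ c * basisPl l c h j) = arr l v"
    using arr_sum[OF l] by (intro ext) simp
  finally show "(S_mat l *\<^sub>v v) $ r = vec_of l (Sop l (arr l v)) $ r"
    unfolding vec_of_def using r by simp
qed

lemma Sop_Pl:
  assumes P: "in_Pl l A"
  shows "in_Pl l (Sop l A)"
  unfolding in_Pl_def
proof (intro allI impI)
  fix h j assume a: "h \<notin> {-int l..int l} \<or> j \<notin> {-(int l - 1)..int l - 1}"
  show "Sop l A h j = 0"
  proof (cases "h \<in> {-int l..int l}")
    case False then show ?thesis unfolding Sop_def beta_def by (simp del: atLeastAtMost_iff)
  next
    case True
    then have "j \<notin> {-(int l - 1)..int l - 1}" using a by simp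
    then show ?thesis unfolding Sop_def by (intro beta_out[OF P]) auto
  qed
qed

lemma in_Pl_arr: "in_Pl l (arr l v)"
  unfolding in_Pl_def arr_def by auto

lemma arr_vec_of:
  assumes l: "l \<ge> 1" and P: "in_Pl l A"
  shows "arr l (vec_of l A) = A"
proof (intro ext)
  fix h j
  show "arr l (vec_of l A) h j = A h j"
  proof (cases "h \<in> {-int l..int l} \<and> j \<in> {-(int l - 1)..int l - 1}")
    case True
    then show ?thesis unfolding arr_def vec_of_def using idx_pos[OF l] by auto
  next
    case False
    then show ?thesis unfolding arr_def using P unfolding in_Pl_def by auto
  qed
qed

lemma vec_of_arr:
  assumes l: "l \<ge> 1" and v: "v \<in> carrier_vec (dimPl l)"
  shows "vec_of l (arr l v) = v"
proof (rule eq_vecI)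
  fix r assume "r < dim_vec v"
  then have r: "r < dimPl l" using v by simp
  show "vec_of l (arr l v) $ r = v $ r"
    unfolding vec_of_def arr_def using r idx_range[OF l r] pos_idx[OF l r] by simp
qed (use v in \<open>simp add: vec_of_def\<close>)

lemma arr_smult:
  assumes l: "l \<ge> 1" and v: "v \<in> carrier_vec (dimPl l)"
  shows "arr l (a \<cdot>\<^sub>v v) = (\<lambda>h j. a * arr l v h j)"
proof (intro ext)
  fix h j
  show "arr l (a \<cdot>\<^sub>v v) h j = a * arr l v h j"
    unfolding arr_def using idx_pos[OF l] v by auto
qed

lemma norm_beta:
  assumes P: "in_Pl l A"
  shows "(\<Sum>h\<in>{-int l..int l}. \<Sum>k\<in>{-(2*int l)..2*int l}. (cmod (beta l A h k))^2)
       = (\<Sum>n\<in>{-int l..int l}. \<Sum>j\<in>{-(int l - 1)..int l - 1}. (cmod (A n j))^2)"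
proof -
  let ?I = "{-int l..int l}" and ?J = "{-(int l - 1)..int l - 1}" and ?K = "{-(2*int l)..2*int l}"
  have "(\<Sum>h\<in>?I. \<Sum>k\<in>?K. (cmod (beta l A h k))^2) = (\<Sum>h\<in>?I. \<Sum>k\<in>?K. (cmod (\<Sum>n\<in>?I. tau l h n * A n (k - n)))^2)"
    by (intro sum.cong refl) (simp add: beta_in)
  also have "\<dots> = (\<Sum>k\<in>?K. \<Sum>h\<in>?I. (cmod (\<Sum>n\<in>?I. tau l h n * A n (k - n)))^2)"
    by (rule sum.swap)
  also have "\<dots> = (\<Sum>k\<in>?K. \<Sum>n\<in>?I. (cmod (A n (k - n)))^2)"
    by (rule sum.cong[OF refl]) (rule tau_iso)
  also have "\<dots> = (\<Sum>n\<in>?I. \<Sum>k\<in>?K. (cmod (A n (k - n)))^2)"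
    by (rule sum.swap)
  also have "\<dots> = (\<Sum>n\<in>?I. \<Sum>j\<in>?J. (cmod (A n j))^2)"
  proof (rule sum.cong[OF refl])
    fix n assume n: "n \<in> ?I"
    have "(\<Sum>k\<in>?K. (cmod (A n (k - n)))^2) = (\<Sum>j\<in>?J. (cmod (A n (j + n - n)))^2)"
      by (rule shift_gen[OF n]) (use P in \<open>auto simp: in_Pl_def\<close>)
    then show "(\<Sum>k\<in>?K. (cmod (A n (k - n)))^2) = (\<Sum>j\<in>?J. (cmod (A n j))^2)" by simp
  qed
  finally show ?thesis .
qed

lemma part1:
  assumes l: "l \<ge> 1"
  shows "spectral_radius (S_mat l) < 1"
proof (rule ccontr)
  let ?I = "{-int l..int l}" and ?J = "{-(int l - 1)..int l - 1}" and ?K = "{-(2*int l)..2*int l}"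
  let ?N = "dimPl l"
  assume "\<not> spectral_radius (S_mat l) < 1"
  then have sr: "spectral_radius (S_mat l) \<ge> 1" by simp
  have N: "?N > 0" using l unfolding dimPl_def by simp
  from spectral_radius_mem_max(1)[OF S_mat_carrier N]
  obtain lam where lam: "lam \<in> spectrum (S_mat l)" "cmod lam = spectral_radius (S_mat l)" by auto
  then have lam1: "cmod lam \<ge> 1" using sr by simp
  from lam(1) obtain v where ev: "eigenvector (S_mat l) v lam"
    unfolding spectrum_def eigenvalue_def by auto
  have dr: "dim_row (S_mat l) = ?N" unfolding S_mat_def by simp
  from ev have v: "v \<in> carrier_vec ?N" and v0: "v \<noteq> 0\<^sub>v ?N" and Sv: "S_mat l *\<^sub>v v = lam \<cdot>\<^sub>v v"
    unfolding eigenvector_def dr by auto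
  define A where "A = arr l v"
  have P: "in_Pl l A" unfolding A_def by (rule in_Pl_arr)
  have SA: "Sop l A = (\<lambda>h j. lam * A h j)"
  proof -
    have "Sop l A = arr l (vec_of l (Sop l A))" using arr_vec_of[OF l Sop_Pl[OF P]] by simp
    also have "vec_of l (Sop l A) = lam \<cdot>\<^sub>v v" using Smat_vec[OF l v] Sv unfolding A_def by simp
    finally show ?thesis unfolding A_def using arr_smult[OF l v] by simp
  qed
  obtain r where r: "r < ?N" and vr: "v $ r \<noteq> 0"
  proof -
    have "\<exists>r<?N. v $ r \<noteq> 0"
    proof (rule ccontr)
      assume "\<not> ?thesis"
      then have "v = 0\<^sub>v ?N" using v by (intro eq_vecI) auto
      then show False using v0 by simp
    qed
    then show ?thesis using that by blast
  qed
  have Ar: "A (idx_h l r) (idx_j l r) \<noteq> 0"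
    unfolding A_def arr_def using idx_range[OF l r] pos_idx[OF l r] vr by simp
  define N2 where "N2 = (\<Sum>n\<in>?I. \<Sum>j\<in>?J. (cmod (A n j))^2)"
  have N2pos: "N2 > 0"
  proof -
    have pi: "(\<Sum>j\<in>?J. (cmod (A (idx_h l r) j))^2) > 0"
      by (rule sum_pos2[where i="idx_j l r"]) (use idx_range[OF l r] Ar in auto)
    show ?thesis unfolding N2_def
      by (rule sum_pos2[where i="idx_h l r"]) (use pi idx_range[OF l r] in \<open>auto intro: sum_nonneg\<close>)
  qed
  define Od where "Od = (\<Sum>h\<in>?I. \<Sum>j\<in>{-int l..int l - 1}. (cmod (beta l A h (2*j+1)))^2)"
  have O0: "Od \<ge> 0" unfolding Od_def by (intro sum_nonneg) auto
  have even_part: "(\<Sum>j\<in>?I. (cmod (beta l A h (2*j)))^2) = (cmod lam)^2 * (\<Sum>j\<in>?J. (cmod (A h j))^2)" for h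
  proof -
    have "(\<Sum>j\<in>?I. (cmod (beta l A h (2*j)))^2) = (\<Sum>j\<in>?I. (cmod lam)^2 * (cmod (A h j))^2)"
      by (intro sum.cong refl) (metis SA Sop_def norm_mult power_mult_distrib)
    also have "\<dots> = (cmod lam)^2 * (\<Sum>j\<in>?I. (cmod (A h j))^2)" by (simp add: sum_distrib_left)
    also have "(\<Sum>j\<in>?I. (cmod (A h j))^2) = (\<Sum>j\<in>?J. (cmod (A h j))^2)"
      by (rule sum.mono_neutral_right) (use P in \<open>auto simp: in_Pl_def\<close>)
    finally show ?thesis .
  qed
  have "N2 = (\<Sum>h\<in>?I. \<Sum>k\<in>?K. (cmod (beta l A h k))^2)" unfolding N2_def by (rule norm_beta[OF P, symmetric])
  also have "\<dots> = (\<Sum>h\<in>?I. (\<Sum>j\<in>?I. (cmod (beta l A h (2*j)))^2) + (\<Sum>j\<in>{-int l..int l - 1}. (cmod (beta l A h (2*j+1)))^2))"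
    by (intro sum.cong refl) (rule split_K)
  also have "\<dots> = (cmod lam)^2 * N2 + Od"
    unfolding Od_def N2_def by (simp add: even_part sum.distrib sum_distrib_left)
  finally have eq: "N2 = (cmod lam)^2 * N2 + Od" .
  have "(cmod lam)^2 \<ge> 1" using lam1 by (simp add: one_le_power)
  then have "(cmod lam)^2 * N2 \<ge> N2" using N2pos by simp
  then have "Od = 0" using eq O0 by linarith
  then have Oz: "\<And>h j. h \<in> ?I \<Longrightarrow> j \<in> {-int l..int l - 1} \<Longrightarrow> beta l A h (2*j+1) = 0"
    unfolding Od_def by (subst (asm) sum_nonneg_eq_0_iff; simp add: sum_nonneg)+
  have lam0: "lam \<noteq> 0" using lam1 by auto
  have "A = (\<lambda>h j. 0)"
  proof (rule key[OF l P lam0])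
    fix h k :: int assume h: "h \<in> ?I" and k: "odd k"
    show "beta l A h k = 0"
    proof (cases "k \<in> ?K")
      case True
      have kk: "k = 2 * (k div 2) + 1" using k by presburger
      have "k div 2 \<in> {-int l..int l - 1}" using True k by auto presburger+
      then show ?thesis using Oz[OF h] kk by metis
    next
      case False then show ?thesis by (intro beta_out[OF P]) auto
    qed
  next
    fix h j :: int assume h: "h \<in> ?I"
    show "beta l A h (2*j) = lam * A h j" using SA unfolding Sop_def by metis
  qed
  then show False using Ar by simp
qed


lemma pow_decay:
  fixes M :: "complex mat"
  assumes M: "M \<in> carrier_mat n n" and n: "n > 0" and sr: "spectral_radius M < 1"
    and i: "i < n" and j: "j < n"
  shows "(\<lambda>k. (M ^\<^sub>m k) $$ (i,j)) \<longlonglongrightarrow> 0"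
proof -
  from spectral_radius_mem_max(1)[OF M n] have sr0: "spectral_radius M \<ge> 0" by auto
  define r where "r = (1 + spectral_radius M) / 2"
  have r0: "r > 0" and r1: "r < 1" and sr_r: "spectral_radius M < r"
    using sr sr0 unfolding r_def by auto
  define B where "B = complex_of_real (1/r) \<cdot>\<^sub>m M"
  have B: "B \<in> carrier_mat n n" unfolding B_def using M by simp
  have rr: "complex_of_real r * complex_of_real (1/r) = 1" using r0
    by (simp flip: of_real_mult)
  have MB: "M = complex_of_real r \<cdot>\<^sub>m B"
    unfolding B_def using M r0 by (intro eq_matI) (auto simp: mult.assoc[symmetric] rr)
  have srB: "spectral_radius B < 1"
  proof -
    from spectral_radius_mem_max(1)[OF B n] obtain mu
      where mu: "mu \<in> spectrum B" "cmod mu = spectral_radius B" by auto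
    from mu(1) obtain v where ev: "eigenvector B v mu" unfolding spectrum_def eigenvalue_def by auto
    have dB: "dim_row B = n" using B by simp
    from ev have v: "v \<in> carrier_vec n" "v \<noteq> 0\<^sub>v n" "B *\<^sub>v v = mu \<cdot>\<^sub>v v"
      unfolding eigenvector_def dB by auto
    have "M *\<^sub>v v = complex_of_real r \<cdot>\<^sub>v (B *\<^sub>v v)"
      unfolding MB using B v(1) by (intro eq_vecI) (auto simp: scalar_prod_def sum_distrib_left mult_ac)
    also have "\<dots> = (complex_of_real r * mu) \<cdot>\<^sub>v v" using v(3) by (simp add: smult_smult_assoc)
    finally have "M *\<^sub>v v = (complex_of_real r * mu) \<cdot>\<^sub>v v" .
    then have "eigenvector M v (complex_of_real r * mu)" unfolding eigenvector_def using v M by auto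
    then have "complex_of_real r * mu \<in> spectrum M" unfolding spectrum_def eigenvalue_def by auto
    then have "cmod (complex_of_real r * mu) \<le> spectral_radius M"
      using spectral_radius_mem_max(2)[OF M n] by auto
    then have "r * cmod mu \<le> spectral_radius M" using r0 by (simp add: norm_mult)
    then have "r * cmod mu < r * 1" using sr_r by linarith
    then have "cmod mu < 1" using r0 by (simp only: mult_less_cancel_left_pos)
    then show ?thesis using mu(2) by simp
  qed
  from spectral_radius_jnf_norm_bound_less_1_upper_triangular[OF B srB]
  obtain C where C: "\<And>k. norm_bound (B ^\<^sub>m k) C" by auto
  have pw: "M ^\<^sub>m k = (complex_of_real r ^ k) \<cdot>\<^sub>m (B ^\<^sub>m k)" for k
  proof (induction k)
    case 0
    show ?case using M B by (intro eq_matI) auto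
  next
    case (Suc k)
    have "M ^\<^sub>m Suc k = M ^\<^sub>m k * M" by simp
    also have "\<dots> = ((complex_of_real r ^ k) \<cdot>\<^sub>m (B ^\<^sub>m k)) * (complex_of_real r \<cdot>\<^sub>m B)"
      using Suc MB by simp
    also have "\<dots> = (complex_of_real r ^ Suc k) \<cdot>\<^sub>m (B ^\<^sub>m Suc k)"
      using B by (intro eq_matI) (auto simp: scalar_prod_def sum_distrib_left mult_ac)
    finally show ?case .
  qed
  have bound: "norm ((M ^\<^sub>m k) $$ (i,j)) \<le> C * r ^ k" for k
  proof -
    have "(M ^\<^sub>m k) $$ (i,j) = complex_of_real r ^ k * (B ^\<^sub>m k) $$ (i,j)"
      using pw[of k] i j B by simp
    then have "norm ((M ^\<^sub>m k) $$ (i,j)) = r ^ k * norm ((B ^\<^sub>m k) $$ (i,j))"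
      using r0 by (simp add: norm_mult norm_power)
    also have "\<dots> \<le> r ^ k * C"
      using C[of k] i j B r0 unfolding norm_bound_def by (intro mult_left_mono) auto
    finally show ?thesis by (simp add: mult.commute)
  qed
  show ?thesis
  proof (rule Lim_null_comparison)
    show "\<forall>\<^sub>F k in sequentially. norm ((M ^\<^sub>m k) $$ (i,j)) \<le> C * r ^ k" using bound by simp
    show "(\<lambda>k. C * r ^ k) \<longlonglongrightarrow> 0"
      by (intro tendsto_mult_right_zero LIMSEQ_power_zero) (use r0 r1 in simp)
  qed
qed

lemma I1:
  fixes f :: "real \<Rightarrow> complex"
  assumes per: "\<And>x. f (x + 2*pi) = f x" and fI: "(f has_integral I) {0..2*pi}"
  shows "((\<lambda>x. f (2*x)) has_integral I) {0..2*pi}"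
proof -
  have "f \<circ> (+) (2*pi) = f" using per by (auto simp: add.commute)
  then have "((f \<circ> (+) (2*pi)) has_integral I) {0..2*pi}" using fI by simp
  then have f2: "(f has_integral I) {2*pi..2*pi+2*pi}"
    using has_integral_shift_Icc_real[of f "2*pi" I 0 "2*pi"] by simp
  have f4: "(f has_integral (I + I)) {0..2*pi+2*pi}"
    by (rule has_integral_combine[OF _ _ fI f2]) auto
  have "((\<lambda>x. f (2 * x)) has_integral (1 / \<bar>2\<bar>) *\<^sub>R (I + I)) ((\<lambda>x. x / 2) ` {0..2*pi+2*pi})"
    by (rule has_integral_stretch_real[OF f4]) simp
  moreover have "(\<lambda>x. x / 2) ` {0..2*pi+2*pi} = {0..2*pi}"
    using image_affinity_atLeastAtMost_div[of 2 0 0 "2*pi+2*pi"] by simp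
  moreover have "(1 / \<bar>2::real\<bar>) *\<^sub>R (I + I) = I" by (simp add: scaleR_conv_of_real)
  ultimately show ?thesis by simp
qed

lemma I2:
  fixes f :: "real \<Rightarrow> complex"
  assumes per: "\<And>x. f (x + 2*pi) = f x" and cont: "continuous_on UNIV f"
  shows "((\<lambda>t. cis t * f (2*t)) has_integral 0) {0..2*pi}"
proof -
  define h where "h = (\<lambda>t. cis t * f (2*t))"
  have c2: "continuous_on UNIV (\<lambda>t. f (2*t))"
    by (rule continuous_on_compose2[OF cont]) (auto intro: continuous_intros)
  have hc: "continuous_on UNIV h" unfolding h_def
    by (intro continuous_on_mult continuous_on_cis continuous_on_id c2)
  have hneg: "h (pi + t) = - h t" for t
  proof -
    have "cis (pi + t) = - cis t" by (simp add: cis_mult[symmetric])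
    moreover have "f (2 * (pi + t)) = f (2*t)" using per[of "2*t"] by (simp add: algebra_simps)
    ultimately show ?thesis unfolding h_def by simp
  qed
  have "h integrable_on {0..pi}"
    by (rule integrable_continuous_interval) (rule continuous_on_subset[OF hc], simp)
  then obtain J where J: "(h has_integral J) {0..pi}" by (auto simp: integrable_on_def)
  have "h \<circ> (+) pi = (\<lambda>x. - h x)" using hneg by auto
  then have "((h \<circ> (+) pi) has_integral -J) {0..pi}" using has_integral_neg[OF J] by simp
  then have J2: "(h has_integral -J) {pi..pi+pi}"
    using has_integral_shift_Icc_real[of h pi "-J" 0 pi] by simp
  have "(h has_integral (J + -J)) {0..pi+pi}"
    by (rule has_integral_combine[OF _ _ J J2]) auto
  moreover have "pi + pi = 2 * pi" by simp
  ultimately show ?thesis unfolding h_def by simp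
qed

lemma cis_per: "cis (x + 2*pi) = cis x"
  using cis_mult[of x "2*pi"] by simp

lemma cis_int_per: "cis (of_int m * (x + 2*pi)) = cis (of_int m * x)"
proof -
  have "cis (of_int m * (x + 2*pi)) = cis (of_int m * x) * cis (2 * pi * of_int m)"
    by (simp add: cis_mult algebra_simps)
  also have "cis (2 * pi * of_int m) = 1" by (rule cis_multiple_2pi) simp
  finally show ?thesis by simp
qed

lemma I3: "((\<lambda>t. cis (of_int k * t)) has_integral (if k = 0 then complex_of_real (2*pi) else 0)) {0..2*pi}"
proof (induction "nat \<bar>k\<bar>" arbitrary: k rule: less_induct)
  case less
  show ?case
  proof (cases "k = 0")
    case True
    then show ?thesis using has_integral_const_real[of "1::complex" 0 "2*pi"]
      by (simp add: content_real scaleR_conv_of_real)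
  next
    case False
    show ?thesis
    proof (cases "even k")
      case True
      then obtain m where k: "k = 2*m" by (auto elim: evenE)
      have m0: "m \<noteq> 0" using False k by simp
      have lt: "nat \<bar>m\<bar> < nat \<bar>k\<bar>" using k m0 by auto
      have IH: "((\<lambda>t. cis (of_int m * t)) has_integral 0) {0..2*pi}" using less(1)[OF lt] m0 by simp
      have "((\<lambda>x. cis (of_int m * (2*x))) has_integral 0) {0..2*pi}"
        by (rule I1[OF cis_int_per IH])
      moreover have "(\<lambda>x. cis (of_int m * (2*x))) = (\<lambda>t. cis (of_int k * t))"
        unfolding k by (auto simp: mult_ac)
      ultimately show ?thesis using False by simp
    next
      case odd: False
      then obtain m where k: "k = 2*m + 1" by (auto elim: oddE)
      have cont: "continuous_on UNIV (\<lambda>x. cis (of_int m * x))" by (intro continuous_intros)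
      have "((\<lambda>t. cis t * cis (of_int m * (2*t))) has_integral 0) {0..2*pi}"
        by (rule I2[OF cis_int_per cont])
      moreover have "(\<lambda>t. cis t * cis (of_int m * (2*t))) = (\<lambda>t. cis (of_int k * t))"
        unfolding k by (auto simp: cis_mult algebra_simps)
      ultimately show ?thesis using False by simp
    qed
  qed
qed


definition evec :: "nat \<Rightarrow> (int \<Rightarrow> int \<Rightarrow> complex) \<Rightarrow> complex \<Rightarrow> complex vec" where
  "evec l A \<omega> = vec (2*l+1) (\<lambda>c. evalA l A \<omega> (int c - int l))"

definition ovec :: "nat \<Rightarrow> (int \<Rightarrow> int \<Rightarrow> complex) \<Rightarrow> complex \<Rightarrow> complex vec" where
  "ovec l A u = vec (2*l+1) (\<lambda>c. \<Sum>j\<in>{-int l..int l - 1}. beta l A (int c - int l) (2*j+1) * u powi j)"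

lemma T_mat_carrier: "T_mat l \<omega> \<in> carrier_mat (2*l+1) (2*l+1)"
  unfolding T_mat_def by simp

lemma T_prod_carrier: "T_prod l k \<omega> \<in> carrier_mat (2*l+1) (2*l+1)"
proof (induction k)
  case 0
  show ?case by (simp only: T_prod.simps(1)) (rule T_mat_carrier)
next
  case (Suc k)
  show ?case by (simp only: T_prod.simps(2)) (rule mult_carrier_mat[OF T_mat_carrier Suc.IH])
qed

lemma T_prod_dim [simp]: "dim_row (T_prod l k \<omega>) = 2*l+1" "dim_col (T_prod l k \<omega>) = 2*l+1"
  using T_prod_carrier[of l k \<omega>] by auto

lemma TP_shift: "T_prod l (Suc k) \<omega> = T_prod l k (\<omega>^2) * T_mat l \<omega>"
proof (induction k)
  case 0
  then show ?case by simp
next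
  case (Suc k)
  have "T_prod l (Suc (Suc k)) \<omega> = T_mat l (\<omega> ^ 2 ^ Suc (Suc k)) * (T_prod l k (\<omega>^2) * T_mat l \<omega>)"
    using Suc by simp
  also have "\<dots> = (T_mat l (\<omega> ^ 2 ^ Suc (Suc k)) * T_prod l k (\<omega>^2)) * T_mat l \<omega>"
    by (rule assoc_mult_mat[symmetric, OF T_mat_carrier T_prod_carrier T_mat_carrier])
  also have "\<omega> ^ 2 ^ Suc (Suc k) = (\<omega>^2) ^ 2 ^ Suc k" by (simp add: power_mult)
  finally show ?case by simp
qed

lemma Tv_entry:
  assumes P: "in_Pl l A" and w: "\<omega> \<noteq> 0" and r: "r < 2*l+1"
  shows "(T_mat l \<omega> *\<^sub>v evec l A \<omega>) $ r = (\<Sum>k\<in>{-(2*int l)..2*int l}. beta l A (int r - int l) k * \<omega> powi k)"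
proof -
  have h: "int r - int l \<in> {-int l..int l}" using r by auto
  have "(T_mat l \<omega> *\<^sub>v evec l A \<omega>) $ r = (\<Sum>c\<in>{0..<2*l+1}. tau l (int r - int l) (int c - int l) * \<omega> powi (int c - int l) * evalA l A \<omega> (int c - int l))"
    using r unfolding T_mat_def evec_def by (simp add: scalar_prod_def)
  also have "\<dots> = (\<Sum>n\<in>{-int l..int l}. tau l (int r - int l) n * \<omega> powi n * evalA l A \<omega> n)"
    by (simp add: sumI0)
  also have "\<dots> = (\<Sum>k\<in>{-(2*int l)..2*int l}. beta l A (int r - int l) k * \<omega> powi k)"
    by (rule TA_expand[OF P h w])
  finally show ?thesis .
qed

lemma T_split:
  assumes P: "in_Pl l A" and w: "\<omega> \<noteq> 0"
  shows "T_mat l \<omega> *\<^sub>v evec l A \<omega> = evec l (Sop l A) (\<omega>^2) + \<omega> \<cdot>\<^sub>v ovec l A (\<omega>^2)"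
proof (rule eq_vecI)
  fix r assume "r < dim_vec (evec l (Sop l A) (\<omega>^2) + \<omega> \<cdot>\<^sub>v ovec l A (\<omega>^2))"
  then have r: "r < 2*l+1" unfolding evec_def ovec_def by simp
  let ?h = "int r - int l"
  have h: "?h \<in> {-int l..int l}" using r by auto
  have "(T_mat l \<omega> *\<^sub>v evec l A \<omega>) $ r = (\<Sum>k\<in>{-(2*int l)..2*int l}. beta l A ?h k * \<omega> powi k)"
    by (rule Tv_entry[OF P w r])
  also have "\<dots> = (\<Sum>j\<in>{-int l..int l}. beta l A ?h (2*j) * \<omega> powi (2*j)) + (\<Sum>j\<in>{-int l..int l - 1}. beta l A ?h (2*j+1) * \<omega> powi (2*j+1))"
    by (rule split_K)
  also have "(\<Sum>j\<in>{-int l..int l}. beta l A ?h (2*j) * \<omega> powi (2*j)) = evalA l (Sop l A) (\<omega>^2) ?h"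
    by (simp add: evalA_ext[OF Sop_Pl[OF P] h] Sop_def powi_2j)
  also have "(\<Sum>j\<in>{-int l..int l - 1}. beta l A ?h (2*j+1) * \<omega> powi (2*j+1)) = \<omega> * (\<Sum>j\<in>{-int l..int l - 1}. beta l A ?h (2*j+1) * (\<omega>^2) powi j)"
    using w by (simp add: power_int_add powi_2j powi_j2 sum_distrib_left mult_ac)
  finally show "(T_mat l \<omega> *\<^sub>v evec l A \<omega>) $ r = (evec l (Sop l A) (\<omega>^2) + \<omega> \<cdot>\<^sub>v ovec l A (\<omega>^2)) $ r"
    using r unfolding evec_def ovec_def by simp
qed (simp add: evec_def ovec_def T_mat_def)

lemma TP_cont:
  assumes r: "r < 2*l+1" and c: "c < 2*l+1"
  shows "continuous_on UNIV (\<lambda>t. T_prod l k (cis t) $$ (r, c))"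
  using r c
proof (induction k arbitrary: r c)
  case 0
  have eq: "T_prod l 0 (cis t) $$ (r, c) = tau l (int r - int l) (int c - int l) * (cis t) powi (int c - int l)" for t
    using 0 by (simp add: T_mat_def)
  show ?case unfolding eq by (auto intro!: continuous_intros)
next
  case (Suc k)
  have eq: "T_prod l (Suc k) (cis t) $$ (r, c) = (\<Sum>i\<in>{0..<2*l+1}. tau l (int r - int l) (int i - int l) * ((cis t) ^ 2 ^ Suc k) powi (int i - int l) * T_prod l k (cis t) $$ (i, c))" for t
    using Suc.prems T_prod_carrier[of l k "cis t"] unfolding T_prod.simps
    by (simp add: T_mat_def scalar_prod_def)
  show ?case unfolding eq
    by (intro continuous_on_sum continuous_on_mult continuous_on_const Suc.IH continuous_intros) (use Suc.prems in auto)
qed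

lemma Mv_cont:
  fixes M :: "real \<Rightarrow> complex mat" and V :: "real \<Rightarrow> complex vec"
  assumes M: "\<And>i j. i < n \<Longrightarrow> j < n \<Longrightarrow> continuous_on UNIV (\<lambda>t. M t $$ (i,j))"
    and V: "\<And>i. i < n \<Longrightarrow> continuous_on UNIV (\<lambda>t. V t $ i)"
    and Mc: "\<And>t. M t \<in> carrier_mat n n" and Vc: "\<And>t. V t \<in> carrier_vec n" and r: "r < n"
  shows "continuous_on UNIV (\<lambda>t. (M t *\<^sub>v V t) $ r)"
proof -
  have eq: "(M t *\<^sub>v V t) $ r = (\<Sum>i\<in>{0..<n}. M t $$ (r, i) * V t $ i)" for t
    using Mc[of t] Vc[of t] r by (simp add: scalar_prod_def)
  show ?thesis unfolding eq
    by (intro continuous_on_sum continuous_on_mult M V) (use r in auto)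
qed

lemma evec_cont: "c < 2*l+1 \<Longrightarrow> continuous_on UNIV (\<lambda>t. evec l A (cis t) $ c)"
  unfolding evec_def evalA_def by (auto intro!: continuous_intros)

lemma ovec_cont: "c < 2*l+1 \<Longrightarrow> continuous_on UNIV (\<lambda>t. ovec l A (cis t) $ c)"
  unfolding ovec_def by (auto intro!: continuous_intros)

lemma evec_carrier: "evec l A \<omega> \<in> carrier_vec (2*l+1)" unfolding evec_def by simp
lemma ovec_carrier: "ovec l A \<omega> \<in> carrier_vec (2*l+1)" unfolding ovec_def by simp

lemma cis_sq: "(cis t)^2 = cis (2*t)"
proof -
  have "(cis t)^2 = cis (t + t)" by (simp only: power2_eq_square cis_mult)
  also have "t + t = 2 * t" by simp
  finally show ?thesis .
qed

lemma main_int: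
  assumes P: "in_Pl l A" and r: "r < 2*l+1"
  shows "((\<lambda>t. (T_prod l k (cis t) *\<^sub>v evec l A (cis t)) $ r) has_integral
           (complex_of_real (2*pi) * (Sop l ^^ Suc k) A (int r - int l) 0)) {0..2*pi}"
  using P r
proof (induction k arbitrary: A r)
  case 0
  let ?K = "{-(2*int l)..2*int l}"
  have eq: "(\<lambda>t. (T_prod l 0 (cis t) *\<^sub>v evec l A (cis t)) $ r) = (\<lambda>t. \<Sum>k\<in>?K. beta l A (int r - int l) k * cis (of_int k * t))"
    using Tv_entry[OF "0.prems"(1) _ "0.prems"(2)] by (auto simp: cis_power_int)
  have "((\<lambda>t. \<Sum>k\<in>?K. beta l A (int r - int l) k * cis (of_int k * t)) has_integral
          (\<Sum>k\<in>?K. beta l A (int r - int l) k * (if k = 0 then complex_of_real (2*pi) else 0))) {0..2*pi}"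
    by (intro has_integral_sum has_integral_mult_right I3) auto
  moreover have "(\<Sum>k\<in>?K. beta l A (int r - int l) k * (if k = 0 then complex_of_real (2*pi) else 0))
      = complex_of_real (2*pi) * (Sop l ^^ Suc 0) A (int r - int l) 0"
    by (simp add: Sop_def if_distrib[where f="\<lambda>x. _ * x"] cong: if_cong)
  ultimately show ?case unfolding eq by simp
next
  case (Suc k)
  let ?h = "int r - int l"
  define g1 where "g1 = (\<lambda>s. (T_prod l k (cis s) *\<^sub>v evec l (Sop l A) (cis s)) $ r)"
  define g2 where "g2 = (\<lambda>s. (T_prod l k (cis s) *\<^sub>v ovec l A (cis s)) $ r)"
  have eq: "(T_prod l (Suc k) (cis t) *\<^sub>v evec l A (cis t)) $ r = g1 (2*t) + cis t * g2 (2*t)" for t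
  proof -
    have "T_prod l (Suc k) (cis t) *\<^sub>v evec l A (cis t) = T_prod l k (cis (2*t)) *\<^sub>v (T_mat l (cis t) *\<^sub>v evec l A (cis t))"
      unfolding TP_shift cis_sq by (rule assoc_mult_mat_vec[OF T_prod_carrier T_mat_carrier evec_carrier])
    also have "T_mat l (cis t) *\<^sub>v evec l A (cis t) = evec l (Sop l A) (cis (2*t)) + cis t \<cdot>\<^sub>v ovec l A (cis (2*t))"
      using T_split[OF Suc.prems(1), of "cis t"] by (simp add: cis_sq)
    also have "T_prod l k (cis (2*t)) *\<^sub>v (evec l (Sop l A) (cis (2*t)) + cis t \<cdot>\<^sub>v ovec l A (cis (2*t)))
        = T_prod l k (cis (2*t)) *\<^sub>v evec l (Sop l A) (cis (2*t)) + T_prod l k (cis (2*t)) *\<^sub>v (cis t \<cdot>\<^sub>v ovec l A (cis (2*t)))"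
      by (rule mult_add_distrib_mat_vec[OF T_prod_carrier evec_carrier]) (use ovec_carrier[of l A "cis (2*t)"] in simp)
    also have "T_prod l k (cis (2*t)) *\<^sub>v (cis t \<cdot>\<^sub>v ovec l A (cis (2*t))) = cis t \<cdot>\<^sub>v (T_prod l k (cis (2*t)) *\<^sub>v ovec l A (cis (2*t)))"
      by (rule mult_mat_vec[OF T_prod_carrier ovec_carrier])
    finally show ?thesis using Suc.prems(2) T_prod_carrier[of l k] unfolding g1_def g2_def by simp
  qed
  have I1': "((\<lambda>t. g1 (2*t)) has_integral (complex_of_real (2*pi) * (Sop l ^^ Suc (Suc k)) A ?h 0)) {0..2*pi}"
  proof (rule I1)
    show "g1 (x + 2*pi) = g1 x" for x unfolding g1_def by (simp add: cis_per)
    have "(g1 has_integral (complex_of_real (2*pi) * (Sop l ^^ Suc k) (Sop l A) ?h 0)) {0..2*pi}"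
      unfolding g1_def by (rule Suc.IH[OF Sop_Pl[OF Suc.prems(1)] Suc.prems(2)])
    then show "(g1 has_integral (complex_of_real (2*pi) * (Sop l ^^ Suc (Suc k)) A ?h 0)) {0..2*pi}"
      by (simp only: funpow_Suc_right o_def)
  qed
  have I2': "((\<lambda>t. cis t * g2 (2*t)) has_integral 0) {0..2*pi}"
  proof (rule I2)
    show "g2 (x + 2*pi) = g2 x" for x unfolding g2_def by (simp add: cis_per)
    show "continuous_on UNIV g2" unfolding g2_def
      by (rule Mv_cont[OF TP_cont ovec_cont T_prod_carrier ovec_carrier Suc.prems(2)])
  qed
  have "((\<lambda>t. g1 (2*t) + cis t * g2 (2*t)) has_integral (complex_of_real (2*pi) * (Sop l ^^ Suc (Suc k)) A ?h 0 + 0)) {0..2*pi}"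
    by (rule has_integral_add[OF I1' I2'])
  then show ?case unfolding eq by simp
qed

lemma iterate:
  assumes l: "l \<ge> 1"
  shows "in_Pl l A \<Longrightarrow> (Sop l ^^ m) A = arr l (S_mat l ^\<^sub>m m *\<^sub>v vec_of l A)"
proof (induction m arbitrary: A)
  case 0
  have v: "vec_of l A \<in> carrier_vec (dimPl l)" unfolding vec_of_def by simp
  have "S_mat l ^\<^sub>m 0 = 1\<^sub>m (dimPl l)" unfolding S_mat_def by simp
  then show ?case using v arr_vec_of[OF l "0.prems"] by simp
next
  case (Suc m)
  have v: "vec_of l A \<in> carrier_vec (dimPl l)" unfolding vec_of_def by simp
  have "(Sop l ^^ Suc m) A = (Sop l ^^ m) (Sop l A)" by (simp only: funpow_Suc_right o_def)
  also have "\<dots> = arr l (S_mat l ^\<^sub>m m *\<^sub>v vec_of l (Sop l A))" by (rule Suc.IH[OF Sop_Pl[OF Suc.prems]])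
  also have "vec_of l (Sop l A) = S_mat l *\<^sub>v vec_of l A"
    using Smat_vec[OF l v] arr_vec_of[OF l Suc.prems] by simp
  also have "S_mat l ^\<^sub>m m *\<^sub>v (S_mat l *\<^sub>v vec_of l A) = S_mat l ^\<^sub>m Suc m *\<^sub>v vec_of l A"
    using assoc_mult_mat_vec[OF pow_carrier_mat[OF S_mat_carrier] S_mat_carrier v] by simp
  finally show ?case .
qed

lemma entry_lim:
  assumes l: "l \<ge> 1" and P: "in_Pl l A" and h: "h \<in> {-int l..int l}" and j: "j \<in> {-(int l - 1)..int l - 1}"
  shows "(\<lambda>m. (Sop l ^^ m) A h j) \<longlonglongrightarrow> 0"
proof -
  let ?N = "dimPl l" and ?p = "pos l h j" and ?x = "vec_of l A"
  have N: "?N > 0" using l unfolding dimPl_def by simp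
  have p: "?p < ?N" using idx_pos[OF l h j] by simp
  have x: "?x \<in> carrier_vec ?N" unfolding vec_of_def by simp
  have eq: "(Sop l ^^ m) A h j = (\<Sum>c\<in>{0..<?N}. (S_mat l ^\<^sub>m m) $$ (?p, c) * ?x $ c)" for m
  proof -
    have "(Sop l ^^ m) A h j = (S_mat l ^\<^sub>m m *\<^sub>v ?x) $ ?p"
      unfolding iterate[OF l P] arr_def using h j by simp
    also have "\<dots> = (\<Sum>c\<in>{0..<?N}. (S_mat l ^\<^sub>m m) $$ (?p, c) * ?x $ c)"
    proof -
      have dr: "dim_row (S_mat l ^\<^sub>m m) = ?N" "dim_vec ?x = ?N" using x by (auto simp: S_mat_def)
      have "(S_mat l ^\<^sub>m m *\<^sub>v ?x) $ ?p = row (S_mat l ^\<^sub>m m) ?p \<bullet> ?x"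
        by (rule index_mult_mat_vec) (simp add: S_mat_def p)
      also have "\<dots> = (\<Sum>c\<in>{0..<?N}. (S_mat l ^\<^sub>m m) $$ (?p, c) * ?x $ c)"
        unfolding scalar_prod_def using dr p x by (simp add: S_mat_def)
      finally show ?thesis .
    qed
    finally show ?thesis .
  qed
  show ?thesis unfolding eq
    by (intro tendsto_null_sum tendsto_mult_left_zero pow_decay[OF S_mat_carrier N part1[OF l]] p) auto
qed

lemma ET_formula:
  assumes l: "l \<ge> 1" and r: "r < 2*l+1" and c: "c < 2*l+1"
  shows "E_T_prod l k r c = (Sop l ^^ Suc k) (\<lambda>h j. if h = int c - int l \<and> j = 0 then 1 else 0) (int r - int l) 0"
proof -
  define ec where "ec = (\<lambda>(h::int) (j::int). if h = int c - int l \<and> j = 0 then (1::complex) else 0)"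
  have P: "in_Pl l ec" unfolding in_Pl_def ec_def using c l by auto
  have ev: "evec l ec \<omega> = unit_vec (2*l+1) c" for \<omega>
  proof (rule eq_vecI)
    fix n assume "n < dim_vec (unit_vec (2*l+1) c)"
    then have n: "n < 2*l+1" by simp
    have "evalA l ec \<omega> (int n - int l) = (\<Sum>j\<in>{-(int l - 1)..int l - 1}. (if n = c \<and> j = 0 then 1 else 0) * \<omega> powi j)"
      unfolding evalA_def ec_def by (intro sum.cong refl) auto
    also have "\<dots> = (if n = c then 1 else 0)"
      using l by (simp add: if_distrib[where f="\<lambda>x. x * _"] cong: if_cong)
    finally show "evec l ec \<omega> $ n = unit_vec (2*l+1) c $ n" unfolding evec_def using n c by simp
  qed (simp add: evec_def)
  have ent: "T_prod l k (cis t) $$ (r, c) = (T_prod l k (cis t) *\<^sub>v evec l ec (cis t)) $ r" for t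
  proof -
    have "(T_prod l k (cis t) *\<^sub>v unit_vec (2*l+1) c) $ r = (\<Sum>i\<in>{0..<2*l+1}. T_prod l k (cis t) $$ (r, i) * (if i = c then 1 else 0))"
      using r c T_prod_carrier[of l k "cis t"] by (simp add: scalar_prod_def)
    also have "\<dots> = T_prod l k (cis t) $$ (r, c)" using c by (simp add: if_distrib[where f="\<lambda>x. _ * x"] cong: if_cong)
    finally show ?thesis unfolding ev by simp
  qed
  have "integral {0..2*pi} (\<lambda>t. T_prod l k (cis t) $$ (r, c)) = complex_of_real (2*pi) * (Sop l ^^ Suc k) ec (int r - int l) 0"
    unfolding ent using main_int[OF P r] by (rule integral_unique)
  then show ?thesis unfolding E_T_prod_def ec_def by simp
qed

lemma part3:
  assumes l: "l \<ge> 1" and r: "r < 2*l+1" and c: "c < 2*l+1"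
  shows "(\<lambda>k. E_T_prod l k r c) \<longlonglongrightarrow> 0"
proof -
  define ec where "ec = (\<lambda>(h::int) (j::int). if h = int c - int l \<and> j = 0 then (1::complex) else 0)"
  have P: "in_Pl l ec" unfolding in_Pl_def ec_def using c l by auto
  have "(\<lambda>m. (Sop l ^^ m) ec (int r - int l) 0) \<longlonglongrightarrow> 0"
    by (rule entry_lim[OF l P]) (use r l in auto)
  then have "(\<lambda>k. (Sop l ^^ Suc k) ec (int r - int l) 0) \<longlonglongrightarrow> 0"
    by (rule LIMSEQ_Suc)
  then show ?thesis unfolding ET_formula[OF l r c] ec_def .
qed


theorem mainTheorem12:
  fixes l :: nat
  assumes "l \<ge> 1"
  shows "spectral_radius (S_mat l) < 1
     \<and> (\<forall>c :: complex. \<forall>A. cmod c = 1 \<longrightarrow> in_Pl l A \<longrightarrow>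
           (\<forall>\<omega> :: complex. \<omega> \<noteq> 0 \<longrightarrow>
              (\<forall>h\<in>{-int l..int l}. (\<Sum>n\<in>{-int l..int l}. tau l h n * \<omega> powi n * evalA l A \<omega> n)
                                   = c * evalA l A (\<omega>\<^sup>2) h))
           \<longrightarrow> A = (\<lambda>h j. 0))
     \<and> (\<forall>r < 2 * l + 1. \<forall>c < 2 * l + 1. (\<lambda>k. E_T_prod l k r c) \<longlonglongrightarrow> 0)"
proof -
  have l: "l \<ge> 1" by (rule assms)
  have p2: "\<And>c A. cmod c = 1 \<Longrightarrow> in_Pl l A \<Longrightarrow>
           (\<forall>\<omega> :: complex. \<omega> \<noteq> 0 \<longrightarrow>
              (\<forall>h\<in>{-int l..int l}. (\<Sum>n\<in>{-int l..int l}. tau l h n * \<omega> powi n * evalA l A \<omega> n)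
                                   = c * evalA l A (\<omega>\<^sup>2) h))
           \<Longrightarrow> A = (\<lambda>h j. 0)"
    by (rule part2[OF l, rotated 2], assumption, force, assumption)
  show ?thesis using part1[OF l] p2 part3[OF l] by blast
qed

end
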